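(* Let $X,Y$ be Banach spaces over $\mathbb{K}\in\{\mathbb{R},\mathbb{C}\}$, let $G\in L(X,Y)$ with $\|G\|=1$, and assume that $\|\cdot\|_G$ is a norm on $L(X,Y)$. Let $T\in L(X,Y)$ satisfy $\|T\|_G=1$. Let $\mathcal{W}(T)\subset L(X,Y)^*$ be the set of all weak*-limits of nets $(\psi_{x_\alpha,y_\alpha^*})$ where $(x_\alpha,y_\alpha^* )\subset S_X\times S_{Y^*}$ is a net with $\|Gx_\alpha\|\to1$ and $y_\alpha^*(Tx_\alpha)\to1$. The following are equivalent: (i) $T$ is a smooth point of the unit ball of $(L(X,Y),\|\cdot\|_G)$; (ii) $\mathcal{W}(T)=\{\varphi\}$ for a single functional $\varphi$ with $\varphi(T)=1$.
   Context: $S_X$ is the unit sphere of $X$, $Y^*$ the dual of $Y$. For $x\in X$, $y^*\in Y^*$, $\psi_{x,y^*}(S)=y^*(Sx)$ for $S\in L(X,Y)$. The $G$-norm is $\|T\|_G := \inf_{\delta>0}\sup\{\|Tx\|: x\in S_X,\ \|Gx\|>1-\delta\}$. $T$ with $\|T\|_G=1$ is a smooth point of the unit ball of $(L(X,Y),\|\cdot\|_G)$ if there is exactly one functional $f$ in the unit sphere of $(L(X,Y),\|\cdot\|_G)^*$ with $f(T)=1$. *)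

theory Defs
  imports "HOL-Analysis.Analysis"
begin

text \<open>Scalar field K is a real normed field (i.e. R or C up to isomorphism).
  A K-Banach space is a real Banach space 'a together with a K-scalar
  multiplication s extending scaleR, with norm (s c x) = norm c * norm x.\<close>

definition kspace :: "('k::real_normed_field \<Rightarrow> 'a::real_normed_vector \<Rightarrow> 'a) \<Rightarrow> bool" where
  "kspace s \<longleftrightarrow>
     (\<forall>a b x. s a (s b x) = s (a * b) x) \<and> (\<forall>x. s 1 x = x) \<and>
     (\<forall>a x y. s a (x + y) = s a x + s a y) \<and> (\<forall>a b x. s (a + b) x = s a x + s b x) \<and>
     (\<forall>r x. s (of_real r) x = scaleR r x) \<and> (\<forall>a x. norm (s a x) = norm a * norm x)"

definition klinear :: "('k \<Rightarrow> 'a \<Rightarrow> 'a) \<Rightarrow> ('k \<Rightarrow> 'b \<Rightarrow> 'b) \<Rightarrow> ('a::plus \<Rightarrow> 'b::plus) \<Rightarrow> bool" where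
  "klinear sX sY T \<longleftrightarrow> (\<forall>x y. T (x + y) = T x + T y) \<and> (\<forall>c x. T (sX c x) = sY c (T x))"

definition Lop :: "('k::real_normed_field \<Rightarrow> 'a::real_normed_vector \<Rightarrow> 'a) \<Rightarrow> ('k \<Rightarrow> 'b::real_normed_vector \<Rightarrow> 'b)
    \<Rightarrow> ('a \<Rightarrow> 'b) set" where
  "Lop sX sY = {T. klinear sX sY T \<and> (\<exists>K. \<forall>x. norm (T x) \<le> K * norm x)}"

definition kdual :: "('k::real_normed_field \<Rightarrow> 'b::real_normed_vector \<Rightarrow> 'b) \<Rightarrow> ('b \<Rightarrow> 'k) set" where
  "kdual sY = Lop sY (\<lambda>c z. c * z)"

definition gnorm :: "('a::real_normed_vector \<Rightarrow> 'b::real_normed_vector) \<Rightarrow> ('a \<Rightarrow> 'b) \<Rightarrow> real" where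
  "gnorm G T = Inf ((\<lambda>\<delta>. Sup ((\<lambda>x. norm (T x)) ` {x. norm x = 1 \<and> norm (G x) > 1 - \<delta>})) ` {0<..})"

definition norm_on_Lop :: "('k::real_normed_field \<Rightarrow> 'a::real_normed_vector \<Rightarrow> 'a) \<Rightarrow> ('k \<Rightarrow> 'b::real_normed_vector \<Rightarrow> 'b)
    \<Rightarrow> (('a \<Rightarrow> 'b) \<Rightarrow> real) \<Rightarrow> bool" where
  "norm_on_Lop sX sY N \<longleftrightarrow>
     (\<forall>S\<in>Lop sX sY. N S \<ge> 0 \<and> (N S = 0 \<longleftrightarrow> S = (\<lambda>x. 0))) \<and>
     (\<forall>S\<in>Lop sX sY. \<forall>c. N (\<lambda>x. sY c (S x)) = norm c * N S) \<and>
     (\<forall>S\<in>Lop sX sY. \<forall>R\<in>Lop sX sY. N (\<lambda>x. S x + R x) \<le> N S + N R)"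

text \<open>The dual of (L(X,Y), G-norm): bounded K-linear functionals, taken extensional
  (zero outside L(X,Y)) so that functionals are determined by their values on L(X,Y).\<close>
definition op_dual :: "('k::real_normed_field \<Rightarrow> 'a::real_normed_vector \<Rightarrow> 'a) \<Rightarrow> ('k \<Rightarrow> 'b::real_normed_vector \<Rightarrow> 'b)
    \<Rightarrow> ('a \<Rightarrow> 'b) \<Rightarrow> ((('a \<Rightarrow> 'b) \<Rightarrow> 'k) set)" where
  "op_dual sX sY G = {f.
     (\<forall>S\<in>Lop sX sY. \<forall>R\<in>Lop sX sY. f (\<lambda>x. S x + R x) = f S + f R) \<and>
     (\<forall>S\<in>Lop sX sY. \<forall>c. f (\<lambda>x. sY c (S x)) = c * f S) \<and>
     (\<exists>K. \<forall>S\<in>Lop sX sY. norm (f S) \<le> K * gnorm G S) \<and>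
     (\<forall>S. S \<notin> Lop sX sY \<longrightarrow> f S = 0)}"

definition op_dual_norm :: "('k::real_normed_field \<Rightarrow> 'a::real_normed_vector \<Rightarrow> 'a) \<Rightarrow> ('k \<Rightarrow> 'b::real_normed_vector \<Rightarrow> 'b)
    \<Rightarrow> ('a \<Rightarrow> 'b) \<Rightarrow> (('a \<Rightarrow> 'b) \<Rightarrow> 'k) \<Rightarrow> real" where
  "op_dual_norm sX sY G f = Sup ((\<lambda>S. norm (f S)) ` {S \<in> Lop sX sY. gnorm G S \<le> 1})"

definition smooth_point :: "('k::real_normed_field \<Rightarrow> 'a::real_normed_vector \<Rightarrow> 'a) \<Rightarrow> ('k \<Rightarrow> 'b::real_normed_vector \<Rightarrow> 'b)
    \<Rightarrow> ('a \<Rightarrow> 'b) \<Rightarrow> ('a \<Rightarrow> 'b) \<Rightarrow> bool" where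
  "smooth_point sX sY G T \<longleftrightarrow>
     (\<exists>!f. f \<in> op_dual sX sY G \<and> op_dual_norm sX sY G f = 1 \<and> f T = 1)"

text \<open>W(T): weak*-limits of nets psi_{x,y*}; a net (x_alpha, y*_alpha) is represented by the
  proper filter it induces on X \<times> Y*; weak* convergence is pointwise convergence on L(X,Y).\<close>
definition W_set :: "('k::real_normed_field \<Rightarrow> 'a::real_normed_vector \<Rightarrow> 'a) \<Rightarrow> ('k \<Rightarrow> 'b::real_normed_vector \<Rightarrow> 'b)
    \<Rightarrow> ('a \<Rightarrow> 'b) \<Rightarrow> ('a \<Rightarrow> 'b) \<Rightarrow> ((('a \<Rightarrow> 'b) \<Rightarrow> 'k) set)" where
  "W_set sX sY G T = {\<phi> \<in> op_dual sX sY G. \<exists>F :: ('a \<times> ('b \<Rightarrow> 'k)) filter.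
     F \<noteq> bot \<and>
     (\<forall>\<^sub>F p in F. norm (fst p) = 1 \<and> snd p \<in> kdual sY \<and> onorm (snd p) = 1) \<and>
     ((\<lambda>p. norm (G (fst p))) \<longlongrightarrow> 1) F \<and>
     ((\<lambda>p. snd p (T (fst p))) \<longlongrightarrow> 1) F \<and>
     (\<forall>S\<in>Lop sX sY. ((\<lambda>p. snd p (S (fst p))) \<longlongrightarrow> \<phi> S) F)}"

end

theory Submission
  imports Defs "HOL-Computational_Algebra.Fundamental_Theorem_Algebra"
begin

definition ev :: "real poly \<Rightarrow> 'a::{real_algebra_1,comm_ring_1} \<Rightarrow> 'a" where
  "ev p x = poly (map_poly of_real p) x"

lemma ev_0 [simp]: "ev 0 x = 0" by (simp add: ev_def)
lemma ev_pCons [simp]: "ev (pCons c p) x = of_real c + x * ev p x"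
  by (simp add: ev_def map_poly_pCons)

lemma ev_add [simp]: "ev (p + q) x = ev p x + ev q x"
proof (induction p arbitrary: q)
  case 0 then show ?case by simp
next
  case (pCons a p)
  show ?case
  proof (cases q rule: pCons_cases)
    case (pCons b q')
    then show ?thesis using pCons.IH[of q'] by (simp add: algebra_simps)
  qed
qed

lemma ev_smult [simp]: "ev (smult c p) x = of_real c * ev p x"
  by (induction p) (simp_all add: algebra_simps)

lemma ev_mult [simp]: "ev (p * q) x = ev p x * ev q x"
  by (induction p) (simp_all add: algebra_simps)

lemma ev_const [simp]: "ev [:c:] x = of_real c" by simp
lemma ev_1 [simp]: "ev 1 x = 1" by (simp add: one_pCons)

lemma ev_power [simp]: "ev (p ^ n) x = ev p x ^ n"
  by (induction n) simp_all

lemma ev_of_real: "ev p (of_real x) = of_real (poly p x)"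
  by (induction p) simp_all


lemma ev_complex_quad: "ev [:(cmod z)\<^sup>2, -2 * Re z, 1:] z = 0"
proof -
  have "ev [:(cmod z)\<^sup>2, -2 * Re z, 1:] z = of_real ((cmod z)\<^sup>2) + z * (of_real (-2 * Re z) + z)"
    by simp
  also have "\<dots> = 0"
    using cmod_power2[of z] by (simp add: complex_eq_iff power2_eq_square algebra_simps)
  finally show ?thesis .
qed

lemma real_poly_factor:
  fixes p :: "real poly" assumes "degree p > 0"
  shows "\<exists>d q. p = d * q \<and> ((\<exists>c. d = [:c,1:]) \<or> (\<exists>s t. d = [:s,t,1:]))"
proof -
  let ?P = "map_poly complex_of_real p"
  have "degree ?P = degree p" by (simp add: degree_map_poly)
  then have "\<not> constant (poly ?P)" using assms by (simp add: constant_degree)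
  then obtain z where z: "poly ?P z = 0" using fundamental_theorem_of_algebra by blast
  then have evz: "ev p z = 0" by (simp add: ev_def)
  show ?thesis
  proof (cases "Im z = 0")
    case True
    then have "z = of_real (Re z)" by (simp add: complex_eq_iff)
    then have "of_real (poly p (Re z)) = (0::complex)" using evz ev_of_real by metis
    then have "poly p (Re z) = 0" by simp
    then have "[:- Re z, 1:] dvd p" by (simp add: poly_eq_0_iff_dvd)
    then obtain q where "p = [:- Re z, 1:] * q" by (auto elim: dvdE)
    then show ?thesis by blast
  next
    case False
    define d where "d = [:(cmod z)\<^sup>2, -2 * Re z, 1:]"
    have dnz: "d \<noteq> 0" by (simp add: d_def)
    have dd: "degree d = 2" by (simp add: d_def)
    define r where "r = p mod d"
    define q where "q = p div d"
    have pe: "p = d * q + r" by (simp add: q_def r_def)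
    have "r = 0 \<or> degree r < 2" using degree_mod_less[OF dnz, of p] dd r_def by auto
    then have rdeg: "degree r \<le> 1" by auto
    have rform: "r = [:coeff r 0, coeff r 1:]"
      by (rule poly_eqI) (use rdeg in \<open>auto simp: coeff_pCons split: nat.splits intro: coeff_eq_0\<close>)
    have "ev p z = ev d z * ev q z + ev r z" using pe by simp
    then have "ev r z = 0" using evz ev_complex_quad[of z] by (simp add: d_def)
    then have "of_real (coeff r 0) + z * of_real (coeff r 1) = 0"
      by (subst (asm) rform) simp
    then have c0: "coeff r 0 + Re z * coeff r 1 = 0" and c1: "Im z * coeff r 1 = 0"
      by (simp_all add: complex_eq_iff)
    from c1 False have "coeff r 1 = 0" by simp
    with c0 have "coeff r 0 = 0" by simp
    with \<open>coeff r 1 = 0\<close> rform have "r = 0" by simp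
    then have "p = d * q" using pe by simp
    then show ?thesis unfolding d_def by blast
  qed
qed


lemma ev_monic_lower:
  fixes a :: "'k::real_normed_field"
  assumes r0: "r \<ge> 0" and quad: "\<And>p s. r\<^sup>2 \<le> norm (a*a + of_real p * a + of_real s)"
  shows "lead_coeff P = 1 \<Longrightarrow> r ^ degree P \<le> norm (ev P a)"
proof (induction "degree P" arbitrary: P rule: less_induct)
  case less
  show ?case
  proof (cases "degree P = 0")
    case True
    then obtain c where "P = [:c:]" by (metis degree_eq_zeroE)
    with less.prems have "P = 1" by (simp add: one_pCons)
    then show ?thesis by simp
  next
    case False
    then have "\<exists>d q. P = d * q \<and> ((\<exists>c. d = [:c,1:]) \<or> (\<exists>s t. d = [:s,t,1:]))"
      using real_poly_factor[of P] by blast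
    then obtain d q where Pdq: "P = d * q" and dform: "(\<exists>c. d = [:c,1:]) \<or> (\<exists>s t. d = [:s,t,1:])"
      by blast
    have Pnz: "P \<noteq> 0" using less.prems by auto
    then have dnz: "d \<noteq> 0" and qnz: "q \<noteq> 0" using Pdq by auto
    have ld: "lead_coeff d = 1" using dform by auto
    have lq: "lead_coeff q = 1" using less.prems Pdq ld by (simp add: lead_coeff_mult)
    have degP: "degree P = degree d + degree q" using Pdq dnz qnz by (simp add: degree_mult_eq)
    have dpos: "degree d > 0" using dform by auto
    have IH: "r ^ degree q \<le> norm (ev q a)"
      using less.hyps[of q] lq degP dpos by simp
    have Dd: "r ^ degree d \<le> norm (ev d a)"
    proof (cases "\<exists>c. d = [:c,1:]")
      case True
      then obtain c where dc: "d = [:c,1:]" by blast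
      have "(of_real c + a) * (of_real c + a) = a*a + of_real (2*c) * a + of_real (c*c)"
        by (simp add: algebra_simps)
      then have "r\<^sup>2 \<le> norm (of_real c + a) ^ 2"
        using quad[of "2*c" "c*c"] by (metis norm_mult power2_eq_square)
      then have "r \<le> norm (of_real c + a)" by (rule power2_le_imp_le) simp
      then show ?thesis using dc by simp
    next
      case False
      then obtain s t where dst: "d = [:s,t,1:]" using dform by blast
      have "ev d a = a*a + of_real t * a + of_real s" using dst by (simp add: algebra_simps)
      then show ?thesis using quad[of t s] dst by (simp add: power2_eq_square add.commute)
    qed
    have "r ^ degree P = r ^ degree d * r ^ degree q" using degP by (simp add: power_add)
    also have "\<dots> \<le> norm (ev d a) * norm (ev q a)"
      by (rule mult_mono[OF Dd IH]) (use r0 in auto)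
    also have "\<dots> = norm (ev P a)" using Pdq by (simp add: norm_mult)
    finally show ?thesis .
  qed
qed


fun Rpoly :: "real poly \<Rightarrow> real \<Rightarrow> nat \<Rightarrow> real poly" where
  "Rpoly q e 0 = 1"
| "Rpoly q e (Suc n) = q * Rpoly q e n + [:(-e)^(Suc n):]"

lemma Rpoly_deg:
  assumes "degree q = 2" "lead_coeff q = 1"
  shows "degree (Rpoly q e n) = 2*n \<and> lead_coeff (Rpoly q e n) = 1"
proof (induction n)
  case 0 then show ?case by simp
next
  case (Suc n)
  have qnz: "q \<noteq> 0" using assms by auto
  have rnz: "Rpoly q e n \<noteq> 0" using Suc by auto
  have d1: "degree (q * Rpoly q e n) = 2 * Suc n" using Suc assms qnz rnz by (simp add: degree_mult_eq)
  have IH2: "lead_coeff (Rpoly q e n) = 1" using Suc.IH by blast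
  have l1: "lead_coeff (q * Rpoly q e n) = 1" by (simp only: lead_coeff_mult IH2 assms(2))
  have lt: "degree [:(-e)^(Suc n):] < degree (q * Rpoly q e n)" using d1 by simp
  show ?case using degree_add_eq_left[OF lt] lead_coeff_add_le[OF lt] d1 l1
    by (simp add: add.commute)
qed

lemma Rpoly_ev:
  "(ev q x + of_real e) * ev (Rpoly q e n) x = ev q x ^ (Suc n) - of_real ((-e)^(Suc n))"
proof (induction n)
  case 0 then show ?case by simp
next
  case (Suc n)
  have "(ev q x + of_real e) * ev (Rpoly q e (Suc n)) x
     = ev q x * ((ev q x + of_real e) * ev (Rpoly q e n) x) + (ev q x + of_real e) * of_real ((-e)^(Suc n))"
    by (simp add: algebra_simps)
  also have "\<dots> = ev q x * (ev q x ^ (Suc n) - of_real ((-e)^(Suc n))) + (ev q x + of_real e) * of_real ((-e)^(Suc n))"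
    using Suc by simp
  also have "\<dots> = ev q x ^ (Suc (Suc n)) - of_real ((-e)^(Suc (Suc n)))"
    by (simp add: algebra_simps)
  finally show ?case .
qed

lemma quad_root:
  fixes a :: "'k::real_normed_field"
  assumes na: "a \<notin> range of_real"
  shows "\<exists>p s. a*a + of_real p * a + of_real s = 0"
proof -
  define \<phi> where "\<phi> = (\<lambda>z::real\<times>real. norm (a*a + of_real (fst z) * a + of_real (snd z)))"
  define \<psi> where "\<psi> = (\<lambda>z::real\<times>real. norm (of_real (fst z) * a + of_real (snd z)))"
  have contphi: "continuous_on UNIV \<phi>" unfolding \<phi>_def
    by (intro continuous_intros)
  have contpsi: "continuous_on UNIV \<psi>" unfolding \<psi>_def
    by (intro continuous_intros)
  have "\<exists>z\<in>sphere 0 1. \<forall>y\<in>sphere 0 1. \<psi> z \<le> \<psi> y"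
    by (rule continuous_attains_inf) (auto intro: continuous_on_subset[OF contpsi] simp: compact_sphere)
  then obtain z0 where z0: "norm z0 = 1" and z0min: "\<And>y. norm y = 1 \<Longrightarrow> \<psi> z0 \<le> \<psi> y" by auto
  define c where "c = \<psi> z0"
  have cpos: "c > 0"
  proof (rule ccontr)
    assume "\<not> c > 0"
    then have "\<psi> z0 = 0" unfolding c_def \<psi>_def by simp
    then have e: "of_real (fst z0) * a = - of_real (snd z0)" unfolding \<psi>_def by (simp add: add_eq_0_iff)
    show False
    proof (cases "fst z0 = 0")
      case True
      then have "snd z0 = 0" using e by simp
      then have "z0 = 0" using True by (simp add: prod_eq_iff)
      then show False using z0 by simp
    next
      case False
      then have "a = of_real (- snd z0 / fst z0)" using e
        by (simp add: field_simps)
      then show False using na by (metis rangeI)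
    qed
  qed
  have psihom: "\<psi> (t *\<^sub>R w) = \<bar>t\<bar> * \<psi> w" for t w
  proof -
    have "of_real (t * fst w) * a + of_real (t * snd w) = (of_real t :: 'k) * (of_real (fst w) * a + of_real (snd w))"
      by (simp add: algebra_simps)
    then show ?thesis unfolding \<psi>_def by (simp add: norm_mult)
  qed
  have psilow: "c * norm z \<le> \<psi> z" for z
  proof (cases "z = 0")
    case True then show ?thesis by (simp add: \<psi>_def)
  next
    case False
    define w where "w = (1 / norm z) *\<^sub>R z"
    have nw: "norm w = 1" using False by (simp add: w_def)
    have zw: "z = norm z *\<^sub>R w" using False by (simp add: w_def)
    have "\<psi> z = norm z * \<psi> w" by (subst zw) (simp add: psihom)
    moreover have "c \<le> \<psi> w" using z0min[OF nw] by (simp add: c_def)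
    ultimately show ?thesis by (metis mult.commute mult_left_mono norm_ge_zero)
  qed
  have philow: "\<psi> z - norm (a*a) \<le> \<phi> z" for z
  proof -
    have "\<psi> z \<le> norm (a*a + of_real (fst z) * a + of_real (snd z)) + norm (a*a)"
      unfolding \<psi>_def using norm_triangle_ineq4[of "a*a + of_real (fst z) * a + of_real (snd z)" "a*a"]
      by (simp add: algebra_simps)
    then show ?thesis unfolding \<phi>_def by simp
  qed
  define C where "C = {z. \<phi> z \<le> \<phi> 0}"
  have "bounded C"
  proof -
    have "norm z \<le> (\<phi> 0 + norm (a*a)) / c" if "z \<in> C" for z
    proof -
      have "c * norm z \<le> \<phi> 0 + norm (a*a)" using psilow[of z] philow[of z] that by (auto simp: C_def)
      then show ?thesis using cpos by (simp add: field_simps)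
    qed
    then show ?thesis unfolding bounded_iff by blast
  qed
  moreover have "closed C" unfolding C_def
    by (rule closed_Collect_le) (use contphi in auto)
  ultimately have compC: "compact C" by (simp add: compact_eq_bounded_closed)
  have "0 \<in> C" by (simp add: C_def)
  then have "\<exists>z\<in>C. \<forall>y\<in>C. \<phi> z \<le> \<phi> y"
    by (intro continuous_attains_inf compC) (auto intro: continuous_on_subset[OF contphi])
  then obtain zm where zmC: "zm \<in> C" and zmmin: "\<And>y. y \<in> C \<Longrightarrow> \<phi> zm \<le> \<phi> y" by blast
  define m where "m = \<phi> zm"
  have mmin: "m \<le> \<phi> y" for y
  proof (cases "y \<in> C")
    case True then show ?thesis using zmmin m_def by auto
  next
    case False then show ?thesis using zmC by (auto simp: C_def m_def)
  qed
  have m0: "m \<ge> 0" by (simp add: m_def \<phi>_def)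
  show ?thesis
  proof (cases "m = 0")
    case True
    then have "a*a + of_real (fst zm) * a + of_real (snd zm) = 0" by (simp add: m_def \<phi>_def)
    then show ?thesis by blast
  next
    case False
    with m0 have mpos: "m > 0" by simp
    define M where "M = C \<inter> {z. \<phi> z = m}"
    have "closed {z. \<phi> z = m}"
      by (rule closed_Collect_eq) (use contphi in auto)
    then have compM: "compact M" unfolding M_def by (rule compact_Int_closed[OF compC])
    have "zm \<in> M" using zmC by (simp add: M_def m_def)
    then have "\<exists>z\<in>M. \<forall>y\<in>M. snd y \<le> snd z"
      by (intro continuous_attains_sup compM) (auto intro: continuous_intros)
    then obtain z1 where z1M: "z1 \<in> M" and z1max: "\<And>y. y \<in> M \<Longrightarrow> snd y \<le> snd z1" by blast
    define p0 where "p0 = fst z1"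
    define s0 where "s0 = snd z1"
    define b where "b = a*a + of_real p0 * a + of_real s0"
    define e where "e = m / 2"
    have epos: "e > 0" using mpos by (simp add: e_def)
    have nb: "norm b = m" using z1M by (simp add: M_def b_def \<phi>_def p0_def s0_def)
    define q0 where "q0 = [:s0, p0, 1:]"
    have evq0: "ev q0 a = b" by (simp add: q0_def b_def algebra_simps)
    have q0deg: "degree q0 = 2" "lead_coeff q0 = 1" by (simp_all add: q0_def)
    define r where "r = sqrt m"
    have r0: "r \<ge> 0" using m0 by (simp add: r_def)
    have rq: "r\<^sup>2 \<le> norm (a*a + of_real p * a + of_real s)" for p s
      using mmin[of "(p,s)"] m0 by (simp add: r_def \<phi>_def)
    have key: "norm (b + of_real e) * m ^ n \<le> m ^ Suc n + e ^ Suc n" for n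
    proof -
      have RD0: "degree (Rpoly q0 e n) = 2*n \<and> lead_coeff (Rpoly q0 e n) = 1"
        by (rule Rpoly_deg[OF q0deg])
      have RD: "degree (Rpoly q0 e n) = 2*n" "lead_coeff (Rpoly q0 e n) = 1"
        using RD0 by blast+
      have "r ^ (2*n) \<le> norm (ev (Rpoly q0 e n) a)"
        using ev_monic_lower[OF r0 rq RD(2)] RD(1) by simp
      moreover have "r ^ (2*n) = m ^ n" using m0 by (simp add: r_def power_mult)
      ultimately have Rl: "m ^ n \<le> norm (ev (Rpoly q0 e n) a)" by simp
      have "norm (b + of_real e) * m ^ n \<le> norm (b + of_real e) * norm (ev (Rpoly q0 e n) a)"
        by (rule mult_left_mono[OF Rl]) simp
      also have "\<dots> = norm (b ^ Suc n - of_real ((-e)^(Suc n)))"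
        using Rpoly_ev[of q0 a e n] evq0 by (simp add: norm_mult[symmetric])
      also have "\<dots> \<le> norm (b ^ Suc n) + norm (of_real ((-e)^(Suc n)) :: 'k)"
        by (rule norm_triangle_ineq4)
      also have "\<dots> = m ^ Suc n + e ^ Suc n"
        using nb epos by (simp only: norm_power norm_of_real power_abs abs_minus_cancel)
      finally show ?thesis .
    qed
    define v where "v = norm (b + of_real e)"
    have vle: "v \<le> m"
    proof (rule ccontr)
      assume "\<not> v \<le> m"
      then have "(v - m) / m > 0" using mpos by simp
      then obtain n where n: "(1/2::real) ^ n < (v - m) / m"
        using real_arch_pow_inv[of "(v - m) / m" "1/2"] by auto
      have "v * m ^ n \<le> m ^ Suc n + e ^ Suc n" using key[of n] by (simp add: v_def)
      also have "e ^ Suc n = m ^ Suc n * (1/2)^Suc n" by (simp add: e_def power_divide)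
      finally have "v * m ^ n \<le> m ^ Suc n * (1 + (1/2)^Suc n)" by (simp add: algebra_simps)
      then have "m^n * v \<le> m^n * (m * (1 + (1/2)^Suc n))" by (simp add: algebra_simps)
      then have "v \<le> m * (1 + (1/2)^Suc n)" using mpos by (simp add: mult_le_cancel_left_pos)
      also have "\<dots> \<le> m * (1 + (1/2)^n)" using mpos by (intro mult_left_mono) (auto simp: power_decreasing)
      also have "\<dots> < m * (1 + (v - m)/m)" using n mpos by simp
      also have "\<dots> = v" using mpos by (simp add: field_simps)
      finally show False by simp
    qed
    have phinew: "\<phi> (p0, s0 + e) = v"
      by (simp add: \<phi>_def v_def b_def algebra_simps)
    then have "\<phi> (p0, s0 + e) = m" using vle mmin[of "(p0, s0+e)"] by simp
    moreover have "m \<le> \<phi> 0" by (rule mmin)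
    ultimately have "(p0, s0 + e) \<in> M" by (simp add: M_def C_def)
    then have "s0 + e \<le> s0" using z1max s0_def by fastforce
    then show ?thesis using epos by simp
  qed
qed



lemma sqrtm1:
  fixes a :: "'k::real_normed_field" assumes na: "a \<notin> range of_real"
  shows "\<exists>J u v. J*J = -1 \<and> a = of_real u + of_real v * J"
proof -
  obtain p s where ps: "a*a + of_real p * a + of_real s = 0" using quad_root[OF na] by blast
  define D where "D = 4 * s - p * p"
  define w where "w = 2*a + of_real p"
  have ww: "w * w = of_real (- D)"
  proof -
    have "w * w = 4 * (a*a + of_real p * a + of_real s) + of_real (p * p - 4 * s)"
      by (simp add: w_def algebra_simps)
    then show ?thesis using ps by (simp add: D_def)
  qed
  show ?thesis
  proof (cases "D > 0")
    case False
    define t where "t = sqrt (- D)"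
    have "w * w = of_real t * of_real t" using ww False
      by (simp add: t_def of_real_mult[symmetric] del: of_real_mult)
    then have "(w - of_real t) * (w + of_real t) = 0" by (simp add: algebra_simps)
    then have "w = of_real t \<or> w = - of_real t" by (auto simp: eq_neg_iff_add_eq_0)
    then have "a = of_real ((t - p)/2) \<or> a = of_real ((- t - p)/2)"
      by (auto simp: w_def field_simps)
    then show ?thesis using na by (metis rangeI)
  next
    case True
    define t where "t = sqrt D"
    have tpos: "t > 0" using True by (simp add: t_def)
    have tt: "t * t = D" using True by (simp add: t_def)
    define J where "J = w / of_real t"
    have "J * J = w * w / (of_real t * of_real t)" by (simp add: J_def)
    also have "\<dots> = -1" using ww tt tpos True
      by (simp add: of_real_mult[symmetric] del: of_real_mult)
    finally have JJ: "J * J = -1" .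
    have "a = of_real (- p / 2) + of_real (t / 2) * J"
      using tpos by (simp add: J_def w_def field_simps)
    then show ?thesis using JJ by blast
  qed
qed

lemma K_class:
  "(\<forall>k::'k::real_normed_field. k \<in> range of_real) \<or>
   (\<exists>J::'k. J*J = -1 \<and> (\<forall>k. \<exists>u v. k = of_real u + of_real v * J))"
proof (cases "\<forall>k::'k. k \<in> range of_real")
  case True then show ?thesis by blast
next
  case False
  then obtain a :: 'k where "a \<notin> range of_real" by blast
  then obtain J :: 'k where JJ: "J*J = -1" using sqrtm1[of a] by blast
  have "\<exists>u v. k = of_real u + of_real v * J" for k
  proof (cases "k \<in> range of_real")
    case True then show ?thesis by (metis add_0_right mult_zero_left of_real_0 rangeE)
  next
    case False
    then obtain J' u v where J': "J'*J' = -1" and k: "k = of_real u + of_real v * J'"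
      using sqrtm1[of k] by blast
    have "(J' - J) * (J' + J) = 0" using JJ J' by (simp add: algebra_simps)
    then have "J' = J \<or> J' = - J" by (auto simp: eq_neg_iff_add_eq_0)
    then show ?thesis
    proof
      assume "J' = J" then show ?thesis using k by blast
    next
      assume "J' = - J" then have "k = of_real u + of_real (-v) * J" using k by simp
      then show ?thesis by blast
    qed
  qed
  then show ?thesis using JJ by blast
qed


definition kstruct :: "'k::real_normed_field \<Rightarrow> ('k \<Rightarrow> real) \<Rightarrow> bool" where
 "kstruct J Rk \<longleftrightarrow> (J = 0 \<or> J*J = -1) \<and> Rk J = 0 \<and> (\<forall>r. Rk (of_real r) = r) \<and>
    (\<forall>x y. Rk (x+y) = Rk x + Rk y) \<and> (\<forall>r x. Rk (of_real r * x) = r * Rk x) \<and>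
    (\<forall>x. x = of_real (Rk x) - J * of_real (Rk (J*x))) \<and>
    (\<forall>x. (norm x)\<^sup>2 = (Rk x)\<^sup>2 + (Rk (J*x))\<^sup>2)"

lemma iota_isometry:
  fixes J :: "'k::real_normed_field"
  assumes JJ: "J*J = -1"
  defines "\<iota> \<equiv> (\<lambda>z. of_real (Re z) + of_real (Im z) * J)"
  shows "norm (\<iota> z) = cmod z"
proof -
  have imult: "\<iota> (z * w) = \<iota> z * \<iota> w" for z w
  proof -
    have "\<iota> z * \<iota> w = of_real (Re z * Re w) + of_real (Re z * Im w + Im z * Re w) * J + of_real (Im z * Im w) * (J*J)"
      by (simp add: \<iota>_def algebra_simps)
    then show ?thesis using JJ by (simp add: \<iota>_def algebra_simps)
  qed
  have i1: "\<iota> 1 = 1" by (simp add: \<iota>_def)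
  have ipow: "\<iota> (z ^ n) = \<iota> z ^ n" for z n
    by (induction n) (simp_all add: i1 imult)
  have nJ: "norm J = 1"
  proof -
    have "norm J * norm J = 1" using JJ by (metis norm_minus_cancel norm_mult norm_one)
    then show ?thesis by (metis abs_norm_cancel mult_cancel_right1 norm_ge_zero power2_eq_1_iff power2_eq_square real_sqrt_abs real_sqrt_one)
  qed
  have ub2: "norm (\<iota> z) \<le> 2 * cmod z" for z
  proof -
    have "norm (\<iota> z) \<le> \<bar>Re z\<bar> + \<bar>Im z\<bar>"
      using norm_triangle_ineq[of "of_real (Re z)::'k" "of_real (Im z) * J"] nJ
      by (simp add: \<iota>_def norm_mult)
    also have "\<dots> \<le> 2 * cmod z" using abs_Re_le_cmod[of z] abs_Im_le_cmod[of z] by simp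
    finally show ?thesis .
  qed
  have ub: "norm (\<iota> z) \<le> cmod z" for z
  proof (rule ccontr)
    assume A: "\<not> norm (\<iota> z) \<le> cmod z"
    have znz: "z \<noteq> 0"
    proof
      assume "z = 0" then show False using A by (simp add: \<iota>_def)
    qed
    then have cz: "cmod z > 0" by simp
    define \<rho> where "\<rho> = norm (\<iota> z) / cmod z"
    have "\<rho> > 1" using A cz by (simp add: \<rho>_def)
    then obtain n where n: "2 < \<rho> ^ n" using real_arch_pow by blast
    have "norm (\<iota> z) ^ n = norm (\<iota> (z^n))" by (simp add: ipow norm_power)
    also have "\<dots> \<le> 2 * cmod z ^ n" using ub2[of "z^n"] by (simp add: norm_power)
    finally have "\<rho> ^ n \<le> 2" using cz by (simp add: \<rho>_def power_divide divide_le_eq)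
    then show False using n by simp
  qed
  show ?thesis
  proof (cases "z = 0")
    case True then show ?thesis by (simp add: \<iota>_def)
  next
    case False
    have "\<iota> z * \<iota> (1/z) = 1" using False by (simp add: imult[symmetric] i1)
    then have "norm (\<iota> z) * norm (\<iota> (1/z)) = 1" by (metis norm_mult norm_one)
    moreover have "norm (\<iota> (1/z)) \<le> 1 / cmod z" using ub[of "1/z"] by (simp add: norm_divide)
    ultimately have "1 \<le> norm (\<iota> z) * (1 / cmod z)"
      by (metis mult_left_mono norm_ge_zero)
    then have "cmod z \<le> norm (\<iota> z)" using False by (simp add: field_simps)
    then show ?thesis using ub[of z] by simp
  qed
qed


definition iotaK :: "'k::real_normed_field \<Rightarrow> complex \<Rightarrow> 'k" where
  "iotaK J z = of_real (Re z) + of_real (Im z) * J"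

lemma iotaK_mult: "J*J = -1 \<Longrightarrow> iotaK J (z * w) = iotaK J z * iotaK J w"
proof -
  assume JJ: "J*J = -1"
  have "iotaK J z * iotaK J w = of_real (Re z * Re w) + of_real (Re z * Im w + Im z * Re w) * J + of_real (Im z * Im w) * (J*J)"
    by (simp add: iotaK_def algebra_simps)
  then show ?thesis using JJ by (simp add: iotaK_def algebra_simps)
qed

lemma iotaK_add: "iotaK J (z + w) = iotaK J z + iotaK J w"
  by (simp add: iotaK_def algebra_simps)
lemma iotaK_diff: "iotaK J (z - w) = iotaK J z - iotaK J w"
  by (simp add: iotaK_def algebra_simps)
lemma iotaK_of_real: "iotaK J (of_real r) = of_real r"
  by (simp add: iotaK_def)
lemma iotaK_ii: "iotaK J \<i> = J"
  by (simp add: iotaK_def)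
lemma iotaK_norm: "J*J = -1 \<Longrightarrow> norm (iotaK J z) = cmod z"
  using iota_isometry[of J z] by (simp add: iotaK_def)

lemma kstruct_exists: "\<exists>(J::'k::real_normed_field) Rk. kstruct J Rk"
proof (cases "\<forall>k::'k. k \<in> range of_real")
  case True
  define Rk :: "'k \<Rightarrow> real" where "Rk = (\<lambda>x. SOME r. x = of_real r)"
  have RkE: "x = of_real (Rk x)" for x
  proof -
    from True obtain r where "x = of_real r" by blast
    then show ?thesis unfolding Rk_def by (rule someI)
  qed
  have Rkr: "Rk (of_real r) = r" for r
    using RkE[of "of_real r"] by (metis of_real_eq_iff)
  have R0: "Rk 0 = 0" using Rkr[of 0] by simp
  have "kstruct (0::'k) Rk"
    unfolding kstruct_def
  proof (intro conjI allI)
    show "Rk 0 = 0" by (rule R0)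
    show "Rk (x + y) = Rk x + Rk y" for x y
    proof -
      have "x + y = of_real (Rk x + Rk y)" using RkE[of x] RkE[of y] by simp
      then show ?thesis using Rkr by metis
    qed
    show "Rk (of_real r * x) = r * Rk x" for r x
    proof -
      have "of_real r * x = of_real (r * Rk x)" using RkE[of x] by simp
      then show ?thesis using Rkr by metis
    qed
    show "x = of_real (Rk x) - 0 * of_real (Rk (0 * x))" for x using RkE[of x] by simp
    show "(norm x)\<^sup>2 = (Rk x)\<^sup>2 + (Rk (0 * x))\<^sup>2" for x
    proof -
      have "norm (of_real (Rk x) :: 'k) = \<bar>Rk x\<bar>" by simp
      then have "norm x = \<bar>Rk x\<bar>" using RkE[of x] by metis
      then show ?thesis using R0 by simp
    qed
  qed (auto simp: Rkr)
  then show ?thesis by blast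
next
  case False
  then obtain J :: 'k where JJ: "J*J = -1" and sp: "\<forall>k. \<exists>u v. k = of_real u + of_real v * J"
    using K_class by blast
  have surj: "\<exists>z. x = iotaK J z" for x
  proof -
    obtain u v where "x = of_real u + of_real v * J" using sp by blast
    then have "x = iotaK J (Complex u v)" by (simp add: iotaK_def)
    then show ?thesis by blast
  qed
  have inj: "iotaK J z = iotaK J w \<Longrightarrow> z = w" for z w
  proof -
    assume "iotaK J z = iotaK J w"
    then have "iotaK J (z - w) = 0" by (simp add: iotaK_diff)
    then have "cmod (z - w) = 0" using iotaK_norm[OF JJ, of "z-w"] by simp
    then show "z = w" by simp
  qed
  define Rk where "Rk = (\<lambda>x. Re (SOME z. x = iotaK J z))"
  have Rki: "Rk (iotaK J z) = Re z" for z
  proof -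
    have "iotaK J z = iotaK J (SOME w. iotaK J z = iotaK J w)" by (rule someI) simp
    then have "(SOME w. iotaK J z = iotaK J w) = z" using inj by metis
    then show ?thesis by (simp add: Rk_def)
  qed
  have "kstruct J Rk"
    unfolding kstruct_def
  proof (intro conjI allI)
    show "J = 0 \<or> J * J = -1" using JJ by simp
    show "Rk J = 0" using Rki[of \<i>] by (simp add: iotaK_ii)
    show "Rk (of_real r) = r" for r using Rki[of "of_real r"] by (simp add: iotaK_of_real)
    show "Rk (x + y) = Rk x + Rk y" for x y
    proof -
      obtain z w where "x = iotaK J z" "y = iotaK J w" using surj by blast
      then show ?thesis by (simp add: iotaK_add[symmetric] Rki)
    qed
    show "Rk (of_real r * x) = r * Rk x" for r x
    proof -
      obtain z where "x = iotaK J z" using surj by blast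
      moreover have "of_real r * iotaK J z = iotaK J (of_real r * z)"
        using iotaK_mult[OF JJ, of "of_real r" z] iotaK_of_real[of J r] by simp
      ultimately show ?thesis by (simp add: Rki)
    qed
    show "x = of_real (Rk x) - J * of_real (Rk (J * x))" for x
    proof -
      obtain z where z: "x = iotaK J z" using surj by blast
      have "J * x = iotaK J (\<i> * z)" using z by (simp add: iotaK_mult[OF JJ] iotaK_ii)
      then have "Rk (J * x) = - Im z" by (simp add: Rki)
      moreover have "Rk x = Re z" using z by (simp add: Rki)
      ultimately show ?thesis using z by (simp add: iotaK_def algebra_simps)
    qed
    show "(norm x)\<^sup>2 = (Rk x)\<^sup>2 + (Rk (J * x))\<^sup>2" for x
    proof -
      obtain z where z: "x = iotaK J z" using surj by blast
      have "J * x = iotaK J (\<i> * z)" using z by (simp add: iotaK_mult[OF JJ] iotaK_ii)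
      then have "Rk (J * x) = - Im z" by (simp add: Rki)
      then show ?thesis using z iotaK_norm[OF JJ, of z] by (simp add: Rki cmod_power2)
    qed
  qed
  then show ?thesis by blast
qed


context
  fixes J :: "'k::real_normed_field" and Rk :: "'k \<Rightarrow> real"
  assumes ks: "kstruct J Rk"
begin

lemma ks_JJ: "J = 0 \<or> J*J = -1" using ks by (simp add: kstruct_def)
lemma ks_RJ: "Rk J = 0" using ks by (simp add: kstruct_def)
lemma ks_of_real [simp]: "Rk (of_real r) = r" using ks by (simp add: kstruct_def)
lemma ks_add [simp]: "Rk (x + y) = Rk x + Rk y" using ks by (simp add: kstruct_def)
lemma ks_scale: "Rk (of_real r * x) = r * Rk x" using ks by (simp add: kstruct_def)
lemma ks_decomp: "x = of_real (Rk x) - J * of_real (Rk (J*x))" using ks by (simp add: kstruct_def)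
lemma ks_norm: "(norm x)\<^sup>2 = (Rk x)\<^sup>2 + (Rk (J*x))\<^sup>2" using ks by (simp add: kstruct_def)

lemma ks_zero [simp]: "Rk 0 = 0" using ks_of_real[of 0] by simp
lemma ks_one [simp]: "Rk 1 = 1" using ks_of_real[of 1] by simp
lemma ks_minus [simp]: "Rk (- x) = - Rk x"
  using ks_add[of x "-x"] by simp
lemma ks_diff [simp]: "Rk (x - y) = Rk x - Rk y"
  using ks_add[of x "-y"] by simp
lemma ks_scale': "Rk (x * of_real r) = r * Rk x"
  using ks_scale[of r x] by (simp add: mult.commute)

lemma ks_bound: "\<bar>Rk x\<bar> \<le> norm x"
proof -
  have "(\<bar>Rk x\<bar>)\<^sup>2 \<le> (norm x)\<^sup>2" using ks_norm[of x] by simp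
  then show ?thesis using power2_le_imp_le[of "\<bar>Rk x\<bar>" "norm x"] by simp
qed

lemma ks_boundJ: "\<bar>Rk (J*x)\<bar> \<le> norm x"
proof -
  have "(\<bar>Rk (J*x)\<bar>)\<^sup>2 \<le> (norm x)\<^sup>2" using ks_norm[of x] by simp
  then show ?thesis using power2_le_imp_le[of "\<bar>Rk (J*x)\<bar>" "norm x"] by simp
qed

lemma ks_normJ: "norm J \<le> 1"
proof (cases "J = 0")
  case False
  then have "J*J = -1" using ks_JJ by simp
  then have "norm (J*J) = 1" by simp
  then have "(norm J)\<^sup>2 = 1" by (simp add: norm_mult power2_eq_square)
  then have "norm J = 1 \<or> norm J = -1" by (simp add: power2_eq_1_iff)
  then show ?thesis by auto
qed simp

lemma ks_norm_sub1: "(norm (x - 1))\<^sup>2 = (norm x)\<^sup>2 - 2 * Rk x + 1"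
proof -
  have "Rk (J * (x - 1)) = Rk (J*x)" using ks_RJ by (simp add: algebra_simps)
  then show ?thesis using ks_norm[of "x - 1"] ks_norm[of x] by (simp add: power2_eq_square algebra_simps)
qed

lemma ks_real_eq: "Rk x = norm x \<Longrightarrow> x = of_real (norm x)"
proof -
  assume a: "Rk x = norm x"
  then have "(Rk (J*x))\<^sup>2 = 0" using ks_norm[of x] by simp
  then have "Rk (J*x) = 0" by simp
  then show ?thesis using ks_decomp[of x] a by simp
qed

lemma ks_compact_cball: "compact (cball (0::'k) r)"
proof -
  define f where "f = (\<lambda>z::real\<times>real. (of_real (fst z) :: 'k) - J * of_real (snd z))"
  have cf: "continuous_on UNIV f" unfolding f_def by (intro continuous_intros)
  have "compact ({-r..r} \<times> {-r..r})" by (intro compact_Times compact_Icc)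
  then have cimg: "compact (f ` ({-r..r} \<times> {-r..r}))"
    by (intro compact_continuous_image continuous_on_subset[OF cf]) auto
  have sub: "cball 0 r \<subseteq> f ` ({-r..r} \<times> {-r..r})"
  proof
    fix x assume "x \<in> cball (0::'k) r"
    then have nx: "norm x \<le> r" by simp
    have "x = f (Rk x, Rk (J*x))" using ks_decomp[of x] by (simp add: f_def)
    moreover have "(Rk x, Rk (J*x)) \<in> {-r..r} \<times> {-r..r}"
      using ks_bound[of x] ks_boundJ[of x] nx by auto
    ultimately show "x \<in> f ` ({-r..r} \<times> {-r..r})" by blast
  qed
  have "cball 0 r = f ` ({-r..r} \<times> {-r..r}) \<inter> cball 0 r" using sub by blast
  then show ?thesis using compact_Int_closed[OF cimg closed_cball, of 0 r] by metis
qed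

end


definition hb_good :: "'b::real_normed_vector \<Rightarrow> ('b \<times> real) set \<Rightarrow> bool" where
  "hb_good y0 H \<longleftrightarrow> (y0, norm y0) \<in> H \<and>
     (\<forall>x a y b. (x,a)\<in>H \<longrightarrow> (y,b)\<in>H \<longrightarrow> (x+y, a+b)\<in>H) \<and>
     (\<forall>x a r. (x,a)\<in>H \<longrightarrow> (r *\<^sub>R x, r*a)\<in>H) \<and>
     (\<forall>x a b. (x,a)\<in>H \<longrightarrow> (x,b)\<in>H \<longrightarrow> a=b) \<and>
     (\<forall>x a. (x,a)\<in>H \<longrightarrow> a \<le> norm x)"

lemma hb_add: "hb_good y0 H \<Longrightarrow> (x,a)\<in>H \<Longrightarrow> (y,b)\<in>H \<Longrightarrow> (x+y, a+b)\<in>H"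
  by (simp add: hb_good_def)
lemma hb_sc: "hb_good y0 H \<Longrightarrow> (x,a)\<in>H \<Longrightarrow> (r *\<^sub>R x, r*a)\<in>H"
  by (simp add: hb_good_def)
lemma hb_fn: "hb_good y0 H \<Longrightarrow> (x,a)\<in>H \<Longrightarrow> (x,b)\<in>H \<Longrightarrow> a = b"
  by (simp add: hb_good_def)
lemma hb_dom: "hb_good y0 H \<Longrightarrow> (x,a)\<in>H \<Longrightarrow> a \<le> norm x"
  by (simp add: hb_good_def)
lemma hb_y0: "hb_good y0 H \<Longrightarrow> (y0, norm y0) \<in> H"
  by (simp add: hb_good_def)

lemma hb_base: "hb_good y0 {(r *\<^sub>R y0, r * norm y0) | r. True}"
  unfolding hb_good_def
proof (intro conjI allI impI)
  show "(y0, norm y0) \<in> {(r *\<^sub>R y0, r * norm y0) |r. True}"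
    by (rule CollectI, rule exI[of _ 1]) simp
  show "(x + y, a + b) \<in> {(r *\<^sub>R y0, r * norm y0) |r. True}"
    if P: "(x, a) \<in> {(r *\<^sub>R y0, r * norm y0) |r. True}" "(y, b) \<in> {(r *\<^sub>R y0, r * norm y0) |r. True}" for x a y b
  proof -
    obtain r1 r2 where "x = r1 *\<^sub>R y0" "a = r1 * norm y0" "y = r2 *\<^sub>R y0" "b = r2 * norm y0" using P by blast
    then show ?thesis by (intro CollectI exI[of _ "r1 + r2"]) (simp add: algebra_simps scaleR_add_left)
  qed
  show "(r *\<^sub>R x, r * a) \<in> {(r *\<^sub>R y0, r * norm y0) |r. True}"
    if P: "(x, a) \<in> {(r *\<^sub>R y0, r * norm y0) |r. True}" for x a r
  proof -
    obtain r1 where "x = r1 *\<^sub>R y0" "a = r1 * norm y0" using P by blast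
    then show ?thesis by (intro CollectI exI[of _ "r * r1"]) simp
  qed
  show "a = b" if P: "(x, a) \<in> {(r *\<^sub>R y0, r * norm y0) |r. True}" "(x, b) \<in> {(r *\<^sub>R y0, r * norm y0) |r. True}" for x a b
  proof -
    obtain r1 r2 where e: "x = r1 *\<^sub>R y0" "a = r1 * norm y0" "x = r2 *\<^sub>R y0" "b = r2 * norm y0" using P by blast
    show ?thesis
    proof (cases "y0 = 0")
      case True then show ?thesis using e by simp
    next
      case False
      then have "r1 = r2" using e by (metis scaleR_cancel_right)
      then show ?thesis using e by simp
    qed
  qed
  show "a \<le> norm x" if P: "(x, a) \<in> {(r *\<^sub>R y0, r * norm y0) |r. True}" for x a
  proof -
    obtain r1 where "x = r1 *\<^sub>R y0" "a = r1 * norm y0" using P by blast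
    then show ?thesis by (simp add: mult_right_mono)
  qed
qed

lemma hb_chain: 
  assumes "C \<in> chains {H. hb_good y0 H}" "C \<noteq> {}"
  shows "hb_good y0 (\<Union>C)"
proof -
  have g: "\<And>H. H \<in> C \<Longrightarrow> hb_good y0 H" using assms(1) by (auto simp: chains_def)
  have ch: "\<And>H1 H2. H1 \<in> C \<Longrightarrow> H2 \<in> C \<Longrightarrow> H1 \<subseteq> H2 \<or> H2 \<subseteq> H1" using assms(1) by (rule chainsD)
  obtain H0 where "H0 \<in> C" using assms(2) by blast
  show ?thesis unfolding hb_good_def
  proof (intro conjI allI impI)
    show "(y0, norm y0) \<in> \<Union>C" using hb_y0[OF g[OF \<open>H0 \<in> C\<close>]] \<open>H0 \<in> C\<close> by blast
    show "(x + y, a + b) \<in> \<Union>C" if P: "(x, a) \<in> \<Union>C" "(y, b) \<in> \<Union>C" for x a y b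
    proof -
      obtain H1 H2 where H: "H1 \<in> C" "H2 \<in> C" "(x,a) \<in> H1" "(y,b) \<in> H2" using P by blast
      show ?thesis
      proof (cases "H1 \<subseteq> H2")
        case True then show ?thesis using hb_add[OF g[OF H(2)], of x a y b] H by blast
      next
        case False then have "H2 \<subseteq> H1" using ch[OF H(1,2)] by blast
        then show ?thesis using hb_add[OF g[OF H(1)], of x a y b] H by blast
      qed
    qed
    show "(r *\<^sub>R x, r * a) \<in> \<Union>C" if P: "(x, a) \<in> \<Union>C" for x a r
      using P hb_sc[OF g] by blast
    show "a = b" if P: "(x, a) \<in> \<Union>C" "(x, b) \<in> \<Union>C" for x a b
    proof -
      obtain H1 H2 where H: "H1 \<in> C" "H2 \<in> C" "(x,a) \<in> H1" "(x,b) \<in> H2" using P by blast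
      show ?thesis
      proof (cases "H1 \<subseteq> H2")
        case True then show ?thesis using hb_fn[OF g[OF H(2)], of x a b] H by blast
      next
        case False then have "H2 \<subseteq> H1" using ch[OF H(1,2)] by blast
        then show ?thesis using hb_fn[OF g[OF H(1)], of x a b] H by blast
      qed
    qed
    show "a \<le> norm x" if P: "(x, a) \<in> \<Union>C" for x a
      using P hb_dom[OF g] by blast
  qed
qed

lemma hb_extend:
  assumes good: "hb_good y0 H" and nz: "\<not> (\<exists>a. (z,a) \<in> H)"
  shows "\<exists>H'. hb_good y0 H' \<and> H \<subseteq> H' \<and> H' \<noteq> H"
proof -
  have add: "(x,a)\<in>H \<Longrightarrow> (y,b)\<in>H \<Longrightarrow> (x+y, a+b)\<in>H" for x a y b using good by (simp add: hb_good_def)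
  have sc: "(x,a)\<in>H \<Longrightarrow> (r *\<^sub>R x, r*a)\<in>H" for x a r using good by (simp add: hb_good_def)
  have fn: "(x,a)\<in>H \<Longrightarrow> (x,b)\<in>H \<Longrightarrow> a = b" for x a b using good by (simp add: hb_good_def)
  have dom: "(x,a)\<in>H \<Longrightarrow> a \<le> norm x" for x a using good by (simp add: hb_good_def)
  have y0H: "(y0, norm y0) \<in> H" using good by (simp add: hb_good_def)
  define Lo where "Lo = {a - norm (x - z) | x a. (x,a) \<in> H}"
  have key: "a - norm (x - z) \<le> norm (y + z) - b" if P: "(x,a)\<in>H" "(y,b)\<in>H" for x a y b
  proof -
    have "a + b \<le> norm (x + y)" using dom[OF add[OF that]] .
    also have "\<dots> = norm ((x - z) + (y + z))" by simp
    also have "\<dots> \<le> norm (x - z) + norm (y + z)" by (rule norm_triangle_ineq)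
    finally show ?thesis by simp
  qed
  have Lone: "Lo \<noteq> {}" using y0H by (auto simp: Lo_def)
  have Lbdd: "bdd_above Lo" unfolding Lo_def bdd_above_def
    using key[OF _ y0H] by blast
  define w where "w = Sup Lo"
  have wlo: "a - norm (x - z) \<le> w" if P: "(x,a)\<in>H" for x a
    unfolding w_def by (rule cSup_upper[OF _ Lbdd]) (use that in \<open>auto simp: Lo_def\<close>)
  have wup: "w \<le> norm (y + z) - b" if P: "(y,b)\<in>H" for y b
    unfolding w_def by (rule cSup_least[OF Lone]) (use key that in \<open>auto simp: Lo_def\<close>)
  define H' where "H' = {(x + t *\<^sub>R z, a + t * w) | x a t. (x,a) \<in> H}"
  have inH': "(x,a) \<in> H \<Longrightarrow> (x + t *\<^sub>R z, a + t * w) \<in> H'" for x a t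
    unfolding H'_def by blast
  have "hb_good y0 H'"
    unfolding hb_good_def
  proof (intro conjI allI impI)
    show "(y0, norm y0) \<in> H'" using inH'[OF y0H, of 0] by simp
    show "(x + y, a + b) \<in> H'" if P: "(x, a) \<in> H'" "(y, b) \<in> H'" for x a y b
    proof -
      obtain x1 a1 t1 x2 a2 t2 where e: "x = x1 + t1 *\<^sub>R z" "a = a1 + t1 * w" "(x1,a1)\<in>H"
        "y = x2 + t2 *\<^sub>R z" "b = a2 + t2 * w" "(x2,a2)\<in>H" using P unfolding H'_def by blast
      have "(x1 + x2 + (t1 + t2) *\<^sub>R z, a1 + a2 + (t1+t2) * w) \<in> H'" by (rule inH'[OF add[OF e(3) e(6)]])
      then show ?thesis using e by (simp add: algebra_simps scaleR_add_left)
    qed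
    show "(r *\<^sub>R x, r * a) \<in> H'" if P: "(x, a) \<in> H'" for x a r
    proof -
      obtain x1 a1 t1 where e: "x = x1 + t1 *\<^sub>R z" "a = a1 + t1 * w" "(x1,a1)\<in>H"
        using P unfolding H'_def by blast
      have "(r *\<^sub>R x1 + (r * t1) *\<^sub>R z, r * a1 + (r * t1) * w) \<in> H'" by (rule inH'[OF sc[OF e(3)]])
      then show ?thesis using e by (simp add: algebra_simps scaleR_add_right)
    qed
    show "a = b" if P: "(x, a) \<in> H'" "(x, b) \<in> H'" for x a b
    proof -
      obtain x1 a1 t1 x2 a2 t2 where e: "x = x1 + t1 *\<^sub>R z" "a = a1 + t1 * w" "(x1,a1)\<in>H"
        "x = x2 + t2 *\<^sub>R z" "b = a2 + t2 * w" "(x2,a2)\<in>H" using P unfolding H'_def by blast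
      have t: "t1 = t2"
      proof (rule ccontr)
        assume ne: "t1 \<noteq> t2"
        have d: "(x2 - x1, a2 - a1) \<in> H" using add[OF e(6) sc[OF e(3), of "-1"]] by simp
        have "(t1 - t2) *\<^sub>R z = x2 - x1" using e(1) e(4) by (simp add: algebra_simps scaleR_diff_left)
        moreover have "z = (1 / (t1 - t2)) *\<^sub>R ((t1 - t2) *\<^sub>R z)" using ne by simp
        ultimately have "z = (1 / (t1 - t2)) *\<^sub>R (x2 - x1)" by simp
        moreover have "((1 / (t1 - t2)) *\<^sub>R (x2 - x1), (1 / (t1 - t2)) * (a2 - a1)) \<in> H" by (rule sc[OF d])
        ultimately have "(z, (1 / (t1 - t2)) * (a2 - a1)) \<in> H" by simp
        then show False using nz by blast
      qed
      then have "x1 = x2" using e by simp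
      then have "a1 = a2" using fn e by blast
      then show ?thesis using e t by simp
    qed
    show "a \<le> norm x" if P: "(x, a) \<in> H'" for x a
    proof -
      obtain x1 a1 t where e: "x = x1 + t *\<^sub>R z" "a = a1 + t * w" "(x1,a1)\<in>H"
        using P unfolding H'_def by blast
      consider "t = 0" | "t > 0" | "t < 0" by linarith
      then show ?thesis
      proof cases
        case 1 then show ?thesis using e dom by simp
      next
        case 2
        have h: "((1/t) *\<^sub>R x1, (1/t) * a1) \<in> H" by (rule sc[OF e(3)])
        have "w \<le> norm ((1/t) *\<^sub>R x1 + z) - (1/t) * a1" by (rule wup[OF h])
        then have "t * w \<le> t * (norm ((1/t) *\<^sub>R x1 + z) - (1/t) * a1)" using 2
          by (intro mult_left_mono) auto
        then have "t * w \<le> t * norm ((1/t) *\<^sub>R x1 + z) - a1" using 2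
          by (simp add: right_diff_distrib)
        also have "t * norm ((1/t) *\<^sub>R x1 + z) = norm (x1 + t *\<^sub>R z)"
        proof -
          have "x1 + t *\<^sub>R z = t *\<^sub>R ((1/t) *\<^sub>R x1 + z)" using 2 by (simp add: scaleR_add_right)
          then show ?thesis using 2 by simp
        qed
        finally show ?thesis using e by simp
      next
        case 3
        define s where "s = - t"
        have sp: "s > 0" using 3 by (simp add: s_def)
        have h: "((1/s) *\<^sub>R x1, (1/s) * a1) \<in> H" by (rule sc[OF e(3)])
        have "(1/s) * a1 - norm ((1/s) *\<^sub>R x1 - z) \<le> w" by (rule wlo[OF h])
        then have "s * ((1/s) * a1 - norm ((1/s) *\<^sub>R x1 - z)) \<le> s * w" using sp by (simp add: mult_left_mono)
        then have "a1 - s * norm ((1/s) *\<^sub>R x1 - z) \<le> s * w" using sp by (simp add: right_diff_distrib)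
        also have "s * norm ((1/s) *\<^sub>R x1 - z) = norm (x1 + t *\<^sub>R z)"
        proof -
          have "x1 + t *\<^sub>R z = s *\<^sub>R ((1/s) *\<^sub>R x1 - z)" using sp by (simp add: s_def scaleR_diff_right)
          then show ?thesis using sp by simp
        qed
        finally show ?thesis using e by (simp add: s_def)
      qed
    qed
  qed
  moreover have "H \<subseteq> H'" using inH'[of _ _ 0] by auto
  moreover have "(z, w) \<in> H'"
  proof -
    have "(0 *\<^sub>R y0 + 1 *\<^sub>R z, 0 * norm y0 + 1 * w) \<in> H'" by (rule inH'[OF sc[OF y0H]])
    then show ?thesis by simp
  qed
  then have "H' \<noteq> H" using nz by blast
  ultimately show ?thesis by blast
qed

lemma hahn_banach_norming:
  fixes y0 :: "'b::real_normed_vector"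
  shows "\<exists>l::'b \<Rightarrow> real. (\<forall>x y. l (x+y) = l x + l y) \<and> (\<forall>r x. l (r *\<^sub>R x) = r * l x) \<and>
           l y0 = norm y0 \<and> (\<forall>y. \<bar>l y\<bar> \<le> norm y)"
proof -
  have "\<forall>C\<in>chains {H. hb_good y0 H}. \<exists>U\<in>{H. hb_good y0 H}. \<forall>X\<in>C. X \<subseteq> U"
  proof
    fix C assume C: "C \<in> chains {H. hb_good y0 H}"
    show "\<exists>U\<in>{H. hb_good y0 H}. \<forall>X\<in>C. X \<subseteq> U"
    proof (cases "C = {}")
      case True then show ?thesis using hb_base[of y0] by blast
    next
      case False then show ?thesis using hb_chain[OF C False] by blast
    qed
  qed
  from Zorn_Lemma2[OF this] obtain H where gH0: "H \<in> {H. hb_good y0 H}"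
    and maxH0: "\<forall>X\<in>{H. hb_good y0 H}. H \<subseteq> X \<longrightarrow> X = H" by blast
  have gH: "hb_good y0 H" using gH0 by simp
  have maxH: "\<And>X. hb_good y0 X \<Longrightarrow> H \<subseteq> X \<Longrightarrow> X = H" using maxH0 by blast
  have total: "\<exists>a. (x,a) \<in> H" for x
  proof (rule ccontr)
    assume "\<not> (\<exists>a. (x,a) \<in> H)"
    then obtain H' where "hb_good y0 H'" "H \<subseteq> H'" "H' \<noteq> H" using hb_extend[OF gH] by blast
    then show False using maxH by blast
  qed
  have add: "(x,a)\<in>H \<Longrightarrow> (y,b)\<in>H \<Longrightarrow> (x+y, a+b)\<in>H" for x a y b using gH by (simp add: hb_good_def)
  have sc: "(x,a)\<in>H \<Longrightarrow> (r *\<^sub>R x, r*a)\<in>H" for x a r using gH by (simp add: hb_good_def)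
  have fn: "(x,a)\<in>H \<Longrightarrow> (x,b)\<in>H \<Longrightarrow> a = b" for x a b using gH by (simp add: hb_good_def)
  have dom: "(x,a)\<in>H \<Longrightarrow> a \<le> norm x" for x a using gH by (simp add: hb_good_def)
  have y0H: "(y0, norm y0) \<in> H" using gH by (simp add: hb_good_def)
  define l where "l = (\<lambda>x. THE a. (x,a) \<in> H)"
  have lH: "(x, l x) \<in> H" for x
  proof -
    obtain a where xa: "(x,a) \<in> H" using total by blast
    show ?thesis unfolding l_def by (rule theI[of _ a]) (use fn xa in blast)+
  qed
  have leq: "(x,a) \<in> H \<Longrightarrow> l x = a" for x a using fn lH by blast
  have ladd: "l (x+y) = l x + l y" for x y using leq[OF add[OF lH lH]] .
  have lsc: "l (r *\<^sub>R x) = r * l x" for r x using leq[OF sc[OF lH]] .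
  have lb: "\<bar>l y\<bar> \<le> norm y" for y
  proof -
    have "l y \<le> norm y" using dom[OF lH] .
    moreover have "- l y \<le> norm y" using dom[OF lH, of "-y"] lsc[of "-1" y] by simp
    ultimately show ?thesis by simp
  qed
  show ?thesis using ladd lsc leq[OF y0H] lb by blast
qed


context
  fixes s :: "'k::real_normed_field \<Rightarrow> 'b::real_normed_vector \<Rightarrow> 'b"
  assumes ksp: "kspace s"
begin

lemma ksp_assoc: "s a (s b x) = s (a * b) x" using ksp by (simp add: kspace_def)
lemma ksp_one [simp]: "s 1 x = x" using ksp by (simp add: kspace_def)
lemma ksp_add_right: "s a (x + y) = s a x + s a y" using ksp by (simp add: kspace_def)
lemma ksp_add_left: "s (a + b) x = s a x + s b x" using ksp by (simp add: kspace_def)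
lemma ksp_of_real: "s (of_real r) x = r *\<^sub>R x" using ksp by (simp add: kspace_def)
lemma ksp_norm: "norm (s a x) = norm a * norm x" using ksp by (simp add: kspace_def)

lemma ksp_zero_left [simp]: "s 0 x = 0" using ksp_of_real[of 0 x] by simp
lemma ksp_zero_right [simp]: "s a 0 = 0" using ksp_norm[of a 0] by simp
lemma ksp_diff_left: "s (a - b) x = s a x - s b x"
  using ksp_add_left[of "a - b" b x] by (simp add: algebra_simps)
lemma ksp_minus_right: "s a (- x) = - s a x"
proof -
  have "s a x + s a (- x) = 0" using ksp_add_right[of a x "-x"] by simp
  then show ?thesis by (metis add.commute eq_neg_iff_add_eq_0)
qed
lemma ksp_diff_right: "s a (x - y) = s a x - s a y"
  using ksp_add_right[of a x "-y"] ksp_minus_right[of a y] by simp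
lemma ksp_comm: "s a (s b x) = s b (s a x)"
  by (simp add: ksp_assoc mult.commute)
lemma ksp_scaleR: "s a (r *\<^sub>R x) = r *\<^sub>R s a x"
  by (metis ksp_comm ksp_of_real)

end

lemma kdual_norming:
  fixes sY :: "'k::real_normed_field \<Rightarrow> 'b::real_normed_vector \<Rightarrow> 'b" and J :: 'k
  assumes ks: "kstruct J Rk" and ksp: "kspace sY" and y0: "y0 \<noteq> 0"
  shows "\<exists>f. f \<in> kdual sY \<and> onorm f = 1 \<and> f y0 = of_real (norm y0)"
proof -
  obtain l :: "'b \<Rightarrow> real" where ladd: "\<And>x y. l (x+y) = l x + l y" and lsc: "\<And>r x. l (r *\<^sub>R x) = r * l x"
    and ly0: "l y0 = norm y0" and lb: "\<And>y. \<bar>l y\<bar> \<le> norm y"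
    using hahn_banach_norming[of y0] by blast
  have ldiff: "l (x - y) = l x - l y" for x y
  proof -
    have "l (x - y) + l y = l x" using ladd[of "x - y" y] by simp
    then show ?thesis by simp
  qed
  define f where "f = (\<lambda>y. (of_real (l y) :: 'k) - J * of_real (l (sY J y)))"
  have fadd: "f (x + y) = f x + f y" for x y
    by (simp add: f_def ladd ksp_add_right[OF ksp] algebra_simps)
  have Rkf: "Rk (f y) = l y" for y
    using ks_RJ[OF ks] by (simp add: f_def ks_diff[OF ks] ks_scale'[OF ks] ks_of_real[OF ks] mult.commute)
  have fhom: "f (sY c y) = c * f y" for c y
  proof -
    define \<alpha> where "\<alpha> = Rk c"
    define \<beta> where "\<beta> = Rk (J * c)"
    have c: "c = of_real \<alpha> - J * of_real \<beta>" unfolding \<alpha>_def \<beta>_def by (rule ks_decomp[OF ks])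
    have sJb: "sY (J * of_real \<beta>) y = \<beta> *\<^sub>R sY J y"
      by (metis ksp_assoc[OF ksp] ksp_of_real[OF ksp] mult.commute)
    have scy: "sY c y = \<alpha> *\<^sub>R y - \<beta> *\<^sub>R sY J y"
      using c by (simp add: ksp_diff_left[OF ksp] ksp_of_real[OF ksp] sJb)
    have l1: "l (sY c y) = \<alpha> * l y - \<beta> * l (sY J y)"
      using scy ldiff lsc by simp
    show ?thesis
    proof (cases "J = 0")
      case True
      have l0: "l 0 = 0" using lsc[of 0 0] by simp
      show ?thesis using l1 c True by (simp add: f_def ksp_zero_left[OF ksp] l0)
    next
      case False
      then have JJ: "J * J = -1" using ks_JJ[OF ks] by simp
      have "sY J (sY c y) = \<alpha> *\<^sub>R sY J y + \<beta> *\<^sub>R y"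
      proof -
        have "sY J (sY c y) = sY J (\<alpha> *\<^sub>R y) - sY J (\<beta> *\<^sub>R sY J y)"
          using scy by (simp add: ksp_diff_right[OF ksp])
        also have "\<dots> = \<alpha> *\<^sub>R sY J y - \<beta> *\<^sub>R sY (J*J) y"
          by (simp add: ksp_scaleR[OF ksp] ksp_assoc[OF ksp])
        also have "\<dots> = \<alpha> *\<^sub>R sY J y + \<beta> *\<^sub>R y"
          using JJ by (simp add: ksp_of_real[OF ksp, of "-1", simplified])
        finally show ?thesis .
      qed
      then have l2: "l (sY J (sY c y)) = \<alpha> * l (sY J y) + \<beta> * l y" by (simp add: ladd lsc)
      have "c * f y = of_real \<alpha> * of_real (l y) - of_real \<alpha> * J * of_real (l (sY J y))
          - of_real \<beta> * J * of_real (l y) + of_real \<beta> * (J * J) * of_real (l (sY J y))"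
        unfolding f_def by (subst c) (simp add: algebra_simps)
      also have "\<dots> = f (sY c y)"
        using JJ by (simp add: f_def l1 l2 algebra_simps)
      finally show ?thesis by simp
    qed
  qed
  have fnorm: "norm (f y) \<le> norm y" for y
  proof (cases "f y = 0")
    case True then show ?thesis by simp
  next
    case False
    define \<theta> where "\<theta> = of_real (norm (f y)) / f y"
    have n\<theta>: "norm \<theta> = 1" using False by (simp add: \<theta>_def norm_divide)
    have "f (sY \<theta> y) = of_real (norm (f y))" using False by (simp add: fhom \<theta>_def)
    then have "norm (f y) = l (sY \<theta> y)" using Rkf[of "sY \<theta> y"] by (simp add: ks_of_real[OF ks])
    also have "\<dots> \<le> norm (sY \<theta> y)" using lb[of "sY \<theta> y"] by simp
    also have "\<dots> = norm y" by (simp add: ksp_norm[OF ksp] n\<theta>)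
    finally show ?thesis .
  qed
  have fy0: "f y0 = of_real (norm y0)"
  proof -
    have "Rk (f y0) = norm y0" using Rkf ly0 by simp
    moreover have "norm (f y0) \<le> norm y0" by (rule fnorm)
    moreover have "\<bar>Rk (f y0)\<bar> \<le> norm (f y0)" by (rule ks_bound[OF ks])
    ultimately have "Rk (f y0) = norm (f y0)" by simp
    then have "f y0 = of_real (norm (f y0))" by (rule ks_real_eq[OF ks])
    then show ?thesis using \<open>Rk (f y0) = norm y0\<close> \<open>Rk (f y0) = norm (f y0)\<close> by simp
  qed
  have blf: "bounded_linear f"
  proof (rule bounded_linear_intro[of _ 1])
    show "f (x + y) = f x + f y" for x y by (rule fadd)
    show "f (r *\<^sub>R x) = r *\<^sub>R f x" for r x
      using fhom[of "of_real r" x] by (simp add: ksp_of_real[OF ksp] scaleR_conv_of_real)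
    show "norm (f x) \<le> norm x * 1" for x using fnorm by simp
  qed
  have "onorm f \<le> 1" by (rule onorm_bound) (use fnorm in auto)
  moreover have "norm (f y0) / norm y0 \<le> onorm f" by (rule le_onorm[OF blf])
  then have "1 \<le> onorm f" using fy0 y0 by simp
  ultimately have on: "onorm f = 1" by simp
  have "f \<in> kdual sY"
    unfolding kdual_def Lop_def klinear_def
    using fadd fhom fnorm by (auto intro!: exI[of _ 1])
  then show ?thesis using on fy0 by blast
qed


lemma Lop_blin:
  assumes ksX: "kspace sX" and ksY: "kspace sY" and S: "S \<in> Lop sX sY"
  shows "bounded_linear S"
proof -
  from S have kl: "klinear sX sY S" and "\<exists>K. \<forall>x. norm (S x) \<le> K * norm x" by (auto simp: Lop_def)
  then obtain K where K: "\<And>x. norm (S x) \<le> K * norm x" by blast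
  show ?thesis
  proof (rule bounded_linear_intro[of _ K])
    show "S (x + y) = S x + S y" for x y using kl by (simp add: klinear_def)
    show "S (r *\<^sub>R x) = r *\<^sub>R S x" for r x
      using kl ksp_of_real[OF ksX, of r x] ksp_of_real[OF ksY, of r "S x"] unfolding klinear_def by metis
    show "norm (S x) \<le> norm x * K" for x using K[of x] by (simp add: mult.commute)
  qed
qed

lemma Lop_bound:
  assumes "S \<in> Lop sX sY"
  shows "\<exists>K\<ge>0. \<forall>x. norm (S x) \<le> K * norm x"
proof -
  obtain K where K: "\<And>x. norm (S x) \<le> K * norm x" using assms by (auto simp: Lop_def)
  have "norm (S x) \<le> max K 0 * norm x" for x
    using K[of x] by (smt (verit) mult_right_mono norm_ge_zero)
  then show ?thesis by (intro exI[of _ "max K 0"]) auto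
qed

lemma Lop_add:
  assumes ksY: "kspace sY" and S: "S \<in> Lop sX sY" and R: "R \<in> Lop sX sY"
  shows "(\<lambda>x. S x + R x) \<in> Lop sX sY"
proof -
  obtain K1 where K1: "\<And>x. norm (S x) \<le> K1 * norm x" using S by (auto simp: Lop_def)
  obtain K2 where K2: "\<And>x. norm (R x) \<le> K2 * norm x" using R by (auto simp: Lop_def)
  have "norm (S x + R x) \<le> (K1 + K2) * norm x" for x
    using norm_triangle_ineq[of "S x" "R x"] K1[of x] K2[of x] by (simp add: algebra_simps)
  moreover have "klinear sX sY (\<lambda>x. S x + R x)"
    using S R by (auto simp: Lop_def klinear_def ksp_add_right[OF ksY])
  ultimately show ?thesis by (auto simp: Lop_def)
qed

lemma Lop_smul:
  assumes ksY: "kspace sY" and S: "S \<in> Lop sX sY"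
  shows "(\<lambda>x. sY c (S x)) \<in> Lop sX sY"
proof -
  obtain K1 where K1: "\<And>x. norm (S x) \<le> K1 * norm x" using S by (auto simp: Lop_def)
  have "norm (sY c (S x)) \<le> (norm c * K1) * norm x" for x
    using K1[of x] by (simp add: ksp_norm[OF ksY] mult_left_mono mult.assoc)
  moreover have "klinear sX sY (\<lambda>x. sY c (S x))"
    using S by (auto simp: Lop_def klinear_def ksp_add_right[OF ksY] ksp_comm[OF ksY])
  ultimately show ?thesis by (auto simp: Lop_def)
qed

lemma kdual_blin:
  assumes ksY: "kspace sY" and y: "y \<in> kdual sY"
  shows "bounded_linear y"
proof -
  have ks1: "kspace (\<lambda>c (z::'k::real_normed_field). c * z)"
    by (simp add: kspace_def algebra_simps norm_mult scaleR_conv_of_real)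
  show ?thesis using Lop_blin[OF ksY ks1] y by (simp add: kdual_def)
qed

lemma kdual_add: "y \<in> kdual sY \<Longrightarrow> y (a + b) = y a + y b"
  by (simp add: kdual_def Lop_def klinear_def)
lemma kdual_hom: "y \<in> kdual sY \<Longrightarrow> y (sY c a) = c * y a"
  by (simp add: kdual_def Lop_def klinear_def)

lemma kdual_norm_le:
  assumes ksY: "kspace sY" and y: "y \<in> kdual sY" and o1: "onorm y = 1"
  shows "norm (y z) \<le> norm z"
  using onorm[OF kdual_blin[OF ksY y], of z] o1 by simp


locale opset =
  fixes sX :: "'k::real_normed_field \<Rightarrow> 'a::banach \<Rightarrow> 'a" and sY :: "'k \<Rightarrow> 'b::banach \<Rightarrow> 'b"
    and G T :: "'a \<Rightarrow> 'b"
  assumes ksX: "kspace sX" and ksY: "kspace sY" and GL: "G \<in> Lop sX sY" and nG: "onorm G = 1"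
    and nrm: "norm_on_Lop sX sY (gnorm G)" and TL: "T \<in> Lop sX sY" and nT: "gnorm G T = 1"

context opset
begin

lemma G_le1: "norm x = 1 \<Longrightarrow> norm (G x) \<le> 1"
  using onorm[OF Lop_blin[OF ksX ksY GL], of x] nG by simp

lemma A_ne: assumes "\<delta> > 0" shows "\<exists>x. norm x = 1 \<and> norm (G x) > 1 - \<delta>"
proof -
  define d where "d = min \<delta> (1/2)"
  have d: "d > 0" "d \<le> \<delta>" "d \<le> 1/2" using assms by (auto simp: d_def)
  have blG: "bounded_linear G" by (rule Lop_blin[OF ksX ksY GL])
  have bdd: "bdd_above (range (\<lambda>x. norm (G x) / norm x))"
  proof -
    have "norm (G x) / norm x \<le> onorm G" for x by (rule le_onorm[OF blG])
    then show ?thesis unfolding bdd_above_def by blast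
  qed
  have "1 - d < (SUP x. norm (G x) / norm x)" using nG d by (simp add: onorm_def)
  then obtain x where x: "1 - d < norm (G x) / norm x" using less_cSUP_iff[OF _ bdd] by auto
  have xnz: "x \<noteq> 0"
  proof
    assume "x = 0" then show False using x d by simp
  qed
  define u where "u = (1 / norm x) *\<^sub>R x"
  have "norm u = 1" using xnz by (simp add: u_def)
  moreover have "G u = (1 / norm x) *\<^sub>R G x" using blG by (simp add: u_def linear_simps(5) bounded_linear.linear)
  then have "norm (G u) = norm (G x) / norm x" by simp
  ultimately show ?thesis using x d by (intro exI[of _ u]) auto
qed

lemma sig_facts:
  assumes S: "S \<in> Lop sX sY" and d: "\<delta> > 0"
  shows "bdd_above ((\<lambda>x. norm (S x)) ` {x. norm x = 1 \<and> norm (G x) > 1 - \<delta>})"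
    and "(\<lambda>x. norm (S x)) ` {x. norm x = 1 \<and> norm (G x) > 1 - \<delta>} \<noteq> {}"
    and "0 \<le> Sup ((\<lambda>x. norm (S x)) ` {x. norm x = 1 \<and> norm (G x) > 1 - \<delta>})"
proof -
  obtain K where K: "\<And>x. norm (S x) \<le> K * norm x" using Lop_bound[OF S] by blast
  show b: "bdd_above ((\<lambda>x. norm (S x)) ` {x. norm x = 1 \<and> norm (G x) > 1 - \<delta>})"
  proof -
    have "\<forall>v\<in>(\<lambda>x. norm (S x)) ` {x. norm x = 1 \<and> norm (G x) > 1 - \<delta>}. v \<le> K"
    proof
      fix v assume "v \<in> (\<lambda>x. norm (S x)) ` {x. norm x = 1 \<and> norm (G x) > 1 - \<delta>}"
      then obtain x where "v = norm (S x)" "norm x = 1" by blast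
      then show "v \<le> K" using K[of x] by simp
    qed
    then show ?thesis unfolding bdd_above_def by blast
  qed
  show ne: "(\<lambda>x. norm (S x)) ` {x. norm x = 1 \<and> norm (G x) > 1 - \<delta>} \<noteq> {}"
    using A_ne[OF d] by blast
  obtain x where x: "norm x = 1 \<and> norm (G x) > 1 - \<delta>" using A_ne[OF d] by blast
  have "norm (S x) \<le> Sup ((\<lambda>x. norm (S x)) ` {x. norm x = 1 \<and> norm (G x) > 1 - \<delta>})"
    by (rule cSup_upper[OF _ b]) (use x in blast)
  then show "0 \<le> Sup ((\<lambda>x. norm (S x)) ` {x. norm x = 1 \<and> norm (G x) > 1 - \<delta>})"
    using norm_ge_zero order_trans by blast
qed

lemma N_facts:
  assumes S: "S \<in> Lop sX sY"
  defines "sig \<equiv> (\<lambda>\<delta>. Sup ((\<lambda>x. norm (S x)) ` {x. norm x = 1 \<and> norm (G x) > 1 - \<delta>}))"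
  shows "gnorm G S = Inf (sig ` {0<..})" and "sig ` {0<..} \<noteq> {}" and "bdd_below (sig ` {0<..})"
proof -
  show "gnorm G S = Inf (sig ` {0<..})" by (simp add: gnorm_def sig_def)
  show "sig ` {0<..} \<noteq> {}" by auto
  show "bdd_below (sig ` {0<..})"
  proof -
    have "\<forall>v\<in>sig ` {0<..}. 0 \<le> v" using sig_facts(3)[OF S] by (auto simp: sig_def)
    then show ?thesis unfolding bdd_below_def by blast
  qed
qed

lemma N_upper:
  assumes S: "S \<in> Lop sX sY" and e: "\<epsilon> > 0"
  shows "\<exists>\<delta>>0. \<forall>x. norm x = 1 \<and> norm (G x) > 1 - \<delta> \<longrightarrow> norm (S x) \<le> gnorm G S + \<epsilon>"
proof -
  define sig where "sig = (\<lambda>\<delta>. Sup ((\<lambda>x. norm (S x)) ` {x. norm x = 1 \<and> norm (G x) > 1 - \<delta>}))"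
  have "Inf (sig ` {0<..}) < gnorm G S + \<epsilon>" using N_facts(1)[OF S] e by (simp add: sig_def)
  then obtain v where "v \<in> sig ` {0<..}" "v < gnorm G S + \<epsilon>"
    using cInf_lessD[OF N_facts(2)[OF S]] unfolding sig_def by blast
  then obtain \<delta> where d: "\<delta> > 0" and sd: "sig \<delta> < gnorm G S + \<epsilon>" by auto
  have "norm (S x) \<le> gnorm G S + \<epsilon>" if "norm x = 1 \<and> norm (G x) > 1 - \<delta>" for x
  proof -
    have "norm (S x) \<le> sig \<delta>" unfolding sig_def
      by (rule cSup_upper[OF _ sig_facts(1)[OF S d]]) (use that in blast)
    then show ?thesis using sd by simp
  qed
  then show ?thesis using d by blast
qed

lemma N_lower:
  assumes S: "S \<in> Lop sX sY" and d: "\<delta> > 0" and e: "\<epsilon> > 0"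
  shows "\<exists>x. norm x = 1 \<and> norm (G x) > 1 - \<delta> \<and> norm (S x) > gnorm G S - \<epsilon>"
proof -
  define sig where "sig = (\<lambda>\<delta>. Sup ((\<lambda>x. norm (S x)) ` {x. norm x = 1 \<and> norm (G x) > 1 - \<delta>}))"
  have "gnorm G S \<le> sig \<delta>"
    unfolding N_facts(1)[OF S, folded sig_def]
    by (rule cInf_lower) (use d N_facts(3)[OF S, folded sig_def] in auto)
  then have "gnorm G S - \<epsilon> < sig \<delta>" using e by simp
  then show ?thesis unfolding sig_def
    using less_cSup_iff[OF sig_facts(2)[OF S d] sig_facts(1)[OF S d]] by auto
qed

end


lemma Rk_tendsto:
  assumes ks: "kstruct J Rk" and g: "(g \<longlongrightarrow> v) F"
  shows "((\<lambda>p. Rk (g p)) \<longlongrightarrow> Rk v) F"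
proof -
  have "\<forall>e>0. eventually (\<lambda>p. dist (g p) v < e) F" using g by (simp add: tendsto_iff)
  then have "\<forall>e>0. eventually (\<lambda>p. dist (Rk (g p)) (Rk v) < e) F"
  proof (intro allI impI)
    fix e :: real assume "e > 0" "\<forall>e>0. eventually (\<lambda>p. dist (g p) v < e) F"
    then have "eventually (\<lambda>p. dist (g p) v < e) F" by blast
    then show "eventually (\<lambda>p. dist (Rk (g p)) (Rk v) < e) F"
    proof (rule eventually_mono)
      fix p assume "dist (g p) v < e"
      moreover have "\<bar>Rk (g p - v)\<bar> \<le> norm (g p - v)" by (rule ks_bound[OF ks])
      ultimately show "dist (Rk (g p)) (Rk v) < e"
        by (simp add: dist_norm ks_diff[OF ks] dist_real_def)
    qed
  qed
  then show ?thesis by (simp add: tendsto_iff)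
qed

context opset
begin

lemma nrm_pos: "S \<in> Lop sX sY \<Longrightarrow> gnorm G S \<ge> 0"
  using nrm by (simp add: norm_on_Lop_def)
lemma nrm_zero: "S \<in> Lop sX sY \<Longrightarrow> gnorm G S = 0 \<Longrightarrow> S = (\<lambda>x. 0)"
  using nrm by (simp add: norm_on_Lop_def)
lemma nrm_hom: "S \<in> Lop sX sY \<Longrightarrow> gnorm G (\<lambda>x. sY c (S x)) = norm c * gnorm G S"
  using nrm by (simp add: norm_on_Lop_def)

lemma opd_add: "f \<in> op_dual sX sY G \<Longrightarrow> S \<in> Lop sX sY \<Longrightarrow> R \<in> Lop sX sY \<Longrightarrow> f (\<lambda>x. S x + R x) = f S + f R"
  by (simp add: op_dual_def)
lemma opd_hom: "f \<in> op_dual sX sY G \<Longrightarrow> S \<in> Lop sX sY \<Longrightarrow> f (\<lambda>x. sY c (S x)) = c * f S"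
  by (simp add: op_dual_def)
lemma opd_out: "f \<in> op_dual sX sY G \<Longrightarrow> S \<notin> Lop sX sY \<Longrightarrow> f S = 0"
  by (simp add: op_dual_def)

lemma supp_bound:
  assumes f: "f \<in> op_dual sX sY G" and n1: "op_dual_norm sX sY G f = 1" and S: "S \<in> Lop sX sY"
  shows "norm (f S) \<le> gnorm G S"
proof -
  obtain K where K: "\<And>S. S \<in> Lop sX sY \<Longrightarrow> norm (f S) \<le> K * gnorm G S"
    using f unfolding op_dual_def by blast
  define B where "B = (\<lambda>S. norm (f S)) ` {S \<in> Lop sX sY. gnorm G S \<le> 1}"
  have bddB: "bdd_above B"
  proof -
    have "\<forall>v\<in>B. v \<le> max K 0"
    proof
      fix v assume "v \<in> B"
      then obtain R where R: "R \<in> Lop sX sY" "gnorm G R \<le> 1" "v = norm (f R)" by (auto simp: B_def)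
      have "K * gnorm G R \<le> max K 0" using R(2) nrm_pos[OF R(1)]
        by (metis max.cobounded2 max_def mult_left_le mult_nonpos_nonneg order_trans)
      then show "v \<le> max K 0" using K[OF R(1)] R(3) by simp
    qed
    then show ?thesis unfolding bdd_above_def by blast
  qed
  have SupB: "Sup B = 1" using n1 by (simp add: op_dual_norm_def B_def)
  show ?thesis
  proof (cases "gnorm G S = 0")
    case True
    then have S0: "S = (\<lambda>x. 0)" by (rule nrm_zero[OF S])
    have "(\<lambda>x. sY 0 (S x)) = S" using S0 by (simp add: ksp_zero_left[OF ksY])
    then have "f S = 0 * f S" using opd_hom[OF f S, of 0] by simp
    then show ?thesis using True by simp
  next
    case False
    then have Np: "gnorm G S > 0" using nrm_pos[OF S] by simp
    define S' where "S' = (\<lambda>x. sY (of_real (1 / gnorm G S)) (S x))"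
    have S'L: "S' \<in> Lop sX sY" unfolding S'_def by (rule Lop_smul[OF ksY S])
    have nof: "norm (of_real (1 / gnorm G S) :: 'k) = 1 / gnorm G S" using Np
      by (simp only: norm_of_real) simp
    then have "gnorm G S' = 1" unfolding S'_def using nrm_hom[OF S] Np by simp
    then have "norm (f S') \<in> B" using S'L by (auto simp: B_def)
    then have "norm (f S') \<le> 1" using cSup_upper[OF _ bddB] SupB by metis
    moreover have "f S' = of_real (1 / gnorm G S) * f S" unfolding S'_def by (rule opd_hom[OF f S])
    then have "norm (f S') = (1 / gnorm G S) * norm (f S)" by (simp only: norm_mult nof)
    ultimately have "norm (f S) / gnorm G S \<le> 1" by simp
    then show ?thesis using Np by (simp add: divide_le_eq)
  qed
qed

lemma supp_norm:
  assumes f: "f \<in> op_dual sX sY G" and b: "\<And>S. S \<in> Lop sX sY \<Longrightarrow> norm (f S) \<le> gnorm G S"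
    and fT: "f T = 1"
  shows "op_dual_norm sX sY G f = 1"
proof -
  define B where "B = (\<lambda>S. norm (f S)) ` {S \<in> Lop sX sY. gnorm G S \<le> 1}"
  have "1 \<in> B" using TL nT fT by (force simp: B_def)
  moreover have "\<forall>v\<in>B. v \<le> 1" using b by (auto simp: B_def intro: order_trans)
  ultimately have "Sup B = 1" by (intro cSup_eq_maximum) auto
  then show ?thesis by (simp add: op_dual_norm_def B_def)
qed

lemma limit_bound:
  assumes F: "F \<noteq> bot"
    and ev: "eventually (\<lambda>p. norm (fst p) = 1 \<and> snd p \<in> kdual sY \<and> onorm (snd p) = 1) F"
    and gl: "((\<lambda>p. norm (G (fst p))) \<longlongrightarrow> 1) F"
    and S: "S \<in> Lop sX sY" and lim: "((\<lambda>p. snd p (S (fst p))) \<longlongrightarrow> v) F"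
  shows "norm v \<le> gnorm G S"
proof (rule field_le_epsilon)
  fix e :: real assume e: "e > 0"
  obtain \<delta> where d: "\<delta> > 0" and dd: "\<And>x. norm x = 1 \<and> norm (G x) > 1 - \<delta> \<Longrightarrow> norm (S x) \<le> gnorm G S + e"
    using N_upper[OF S e] by blast
  have "eventually (\<lambda>p. dist (norm (G (fst p))) 1 < \<delta>) F" using gl d by (simp add: tendsto_iff)
  then have "eventually (\<lambda>p. norm (snd p (S (fst p))) \<le> gnorm G S + e) F"
    using ev
  proof eventually_elim
    case (elim p)
    then have "norm (G (fst p)) > 1 - \<delta>" by (simp add: dist_real_def)
    then have "norm (S (fst p)) \<le> gnorm G S + e" using dd elim by blast
    moreover have "norm (snd p (S (fst p))) \<le> norm (S (fst p))"
      using kdual_norm_le[OF ksY] elim by blast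
    ultimately show ?case by simp
  qed
  then show "norm v \<le> gnorm G S + e"
    using tendsto_upperbound[OF tendsto_norm[OF lim] _ F] by blast
qed

lemma W_support:
  assumes "\<phi> \<in> W_set sX sY G T"
  shows "\<phi> \<in> op_dual sX sY G \<and> (\<forall>S\<in>Lop sX sY. norm (\<phi> S) \<le> gnorm G S) \<and> \<phi> T = 1"
proof -
  obtain F :: "('a \<times> ('b \<Rightarrow> 'k)) filter" where F: "F \<noteq> bot"
    and ev: "eventually (\<lambda>p. norm (fst p) = 1 \<and> snd p \<in> kdual sY \<and> onorm (snd p) = 1) F"
    and gl: "((\<lambda>p. norm (G (fst p))) \<longlongrightarrow> 1) F"
    and tl: "((\<lambda>p. snd p (T (fst p))) \<longlongrightarrow> 1) F"
    and lims: "\<forall>S\<in>Lop sX sY. ((\<lambda>p. snd p (S (fst p))) \<longlongrightarrow> \<phi> S) F"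
    and od: "\<phi> \<in> op_dual sX sY G"
    using assms unfolding W_set_def by blast
  have "\<phi> T = 1" using tendsto_unique[OF F lims[rule_format, OF TL] tl] .
  moreover have "\<forall>S\<in>Lop sX sY. norm (\<phi> S) \<le> gnorm G S"
    using limit_bound[OF F ev gl] lims by blast
  ultimately show ?thesis using od by blast
qed

end


context opset
begin

lemma W_exists:
  fixes P :: "real \<Rightarrow> ('a \<times> ('b \<Rightarrow> 'k)) set" and J :: 'k
  assumes ks: "kstruct J Rk"
    and Pne: "\<And>\<epsilon>. \<epsilon> > 0 \<Longrightarrow> P \<epsilon> \<noteq> {}"
    and Pmono: "\<And>\<epsilon>1 \<epsilon>2. 0 < \<epsilon>1 \<Longrightarrow> \<epsilon>1 \<le> \<epsilon>2 \<Longrightarrow> P \<epsilon>1 \<subseteq> P \<epsilon>2"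
    and Psub: "\<And>\<epsilon> p. \<epsilon> > 0 \<Longrightarrow> p \<in> P \<epsilon> \<Longrightarrow> norm (fst p) = 1 \<and> snd p \<in> kdual sY \<and> onorm (snd p) = 1
                   \<and> norm (G (fst p)) > 1 - \<epsilon> \<and> norm (snd p (T (fst p)) - 1) < \<epsilon>"
  shows "\<exists>\<psi> U. \<psi> \<in> W_set sX sY G T \<and> U \<noteq> bot \<and> (\<forall>\<epsilon>>0. eventually (\<lambda>p. p \<in> P \<epsilon>) U)
            \<and> (\<forall>S\<in>Lop sX sY. ((\<lambda>p. snd p (S (fst p))) \<longlongrightarrow> \<psi> S) U)"
proof -
  define F0 where "F0 = (INF \<epsilon>\<in>{0<..}. principal (P \<epsilon>))"
  have evF0: "eventually Q F0 \<longleftrightarrow> (\<exists>\<epsilon>\<in>{0<..}. eventually Q (principal (P \<epsilon>)))" for Q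
    unfolding F0_def
  proof (rule eventually_INF_base)
    show "{0<..} \<noteq> ({}::real set)" by auto
    fix a b :: real assume "a \<in> {0<..}" "b \<in> {0<..}"
    then show "\<exists>x\<in>{0<..}. principal (P x) \<le> inf (principal (P a)) (principal (P b))"
      using Pmono by (intro bexI[of _ "min a b"]) (auto simp: inf_principal)
  qed
  have F0ne: "F0 \<noteq> bot"
  proof
    assume "F0 = bot"
    then have "eventually (\<lambda>_. False) F0" by simp
    then obtain \<epsilon> where e0: "\<epsilon> > 0" and ee: "eventually (\<lambda>_. False) (principal (P \<epsilon>))" using evF0 by auto
    from ee have "P \<epsilon> = {}" unfolding eventually_principal by blast
    then show False using Pne[OF e0] by blast
  qed
  have evP: "eventually (\<lambda>p. p \<in> P \<epsilon>) F0" if "\<epsilon> > 0" for \<epsilon>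
    using evF0 that by (auto simp: eventually_principal)
  define Kb where "Kb = (\<lambda>S. if S \<in> Lop sX sY then (SOME K. K \<ge> 0 \<and> (\<forall>x. norm (S x) \<le> K * norm x)) else (0::real))"
  have Kb: "Kb S \<ge> 0 \<and> (\<forall>x. norm (S x) \<le> Kb S * norm x)" if "S \<in> Lop sX sY" for S
    using someI_ex[OF Lop_bound[OF that]] that by (simp add: Kb_def)
  define \<Phi> where "\<Phi> = (\<lambda>(p::'a \<times> ('b \<Rightarrow> 'k)) S. if S \<in> Lop sX sY then snd p (S (fst p)) else 0)"
  define Q where "Q = PiE UNIV (\<lambda>S. cball (0::'k) (Kb S))"
  have compQ: "compact Q"
  proof -
    have "compactin (product_topology (\<lambda>i. euclidean) UNIV) Q"
      unfolding Q_def compactin_PiE using ks_compact_cball[OF ks] by simp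
    then show ?thesis by (simp add: euclidean_product_topology)
  qed
  have inQ: "q \<in> Q \<longleftrightarrow> (\<forall>S. q S \<in> cball 0 (Kb S))" for q by (simp add: Q_def PiE_iff)
  have evQ: "eventually (\<lambda>p. \<Phi> p \<in> Q) F0"
    using evP[OF zero_less_one]
  proof (rule eventually_mono)
    fix p assume p: "p \<in> P 1"
    then have p1: "norm (fst p) = 1" "snd p \<in> kdual sY" "onorm (snd p) = 1" using Psub[of 1 p] by auto
    show "\<Phi> p \<in> Q" unfolding inQ
    proof
      fix S
      show "\<Phi> p S \<in> cball 0 (Kb S)"
      proof (cases "S \<in> Lop sX sY")
        case True
        have "norm (snd p (S (fst p))) \<le> norm (S (fst p))" using kdual_norm_le[OF ksY p1(2,3)] .
        also have "\<dots> \<le> Kb S" using Kb[OF True] p1(1) by (metis mult.right_neutral)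
        finally show ?thesis using True by (simp add: \<Phi>_def)
      next
        case False then show ?thesis by (simp add: \<Phi>_def Kb_def)
      qed
    qed
  qed
  have "filtermap \<Phi> F0 \<noteq> bot" using F0ne by (simp add: filtermap_bot_iff)
  moreover have "eventually (\<lambda>q. q \<in> Q) (filtermap \<Phi> F0)" using evQ by (simp add: eventually_filtermap)
  ultimately obtain \<psi> where \<psi>Q: "\<psi> \<in> Q" and nb: "inf (nhds \<psi>) (filtermap \<Phi> F0) \<noteq> bot"
    using compQ unfolding compact_filter by blast
  define U where "U = inf (filtercomap \<Phi> (nhds \<psi>)) F0"
  have Une: "U \<noteq> bot"
  proof
    assume "U = bot"
    then have "eventually (\<lambda>_. False) U" by simp
    then obtain Q1 R1 where Q1: "eventually Q1 (filtercomap \<Phi> (nhds \<psi>))" and R1: "eventually R1 F0"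
      and QR: "\<forall>x. Q1 x \<and> R1 x \<longrightarrow> False" unfolding U_def eventually_inf by blast
    obtain A where A: "eventually A (nhds \<psi>)" and AQ: "\<forall>x. A (\<Phi> x) \<longrightarrow> Q1 x"
      using Q1 unfolding eventually_filtercomap by blast
    have "eventually (\<lambda>p. \<not> A (\<Phi> p)) F0" using R1 by (rule eventually_mono) (use QR AQ in blast)
    then have "eventually (\<lambda>q. \<not> A q) (filtermap \<Phi> F0)" by (simp add: eventually_filtermap)
    then have "eventually (\<lambda>_. False) (inf (nhds \<psi>) (filtermap \<Phi> F0))"
      unfolding eventually_inf using A by blast
    then show False using nb by simp
  qed
  have UF0: "U \<le> F0" by (simp add: U_def)
  have evPU: "eventually (\<lambda>p. p \<in> P \<epsilon>) U" if "\<epsilon> > 0" for \<epsilon>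
    using filter_leD[OF UF0 evP[OF that]] .
  have limPhi: "(\<Phi> \<longlongrightarrow> \<psi>) U" unfolding filterlim_iff_le_filtercomap U_def by simp
  have limS0: "((\<lambda>p. \<Phi> p S) \<longlongrightarrow> \<psi> S) U" for S
  proof -
    have "((\<lambda>p. (\<lambda>q. q S) (\<Phi> p)) \<longlongrightarrow> (\<lambda>q. q S) \<psi>) U"
      by (rule continuous_on_tendsto_compose[OF continuous_on_product_coordinates limPhi]) auto
    then show ?thesis by simp
  qed
  have limS: "((\<lambda>p. snd p (S (fst p))) \<longlongrightarrow> \<psi> S) U" if "S \<in> Lop sX sY" for S
    using limS0[of S] that by (simp add: \<Phi>_def)
  have \<psi>out: "\<psi> S = 0" if "S \<notin> Lop sX sY" for S
  proof -
    have "\<psi> S \<in> cball 0 (Kb S)" using \<psi>Q unfolding inQ by blast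
    moreover have "Kb S = 0" using that by (simp add: Kb_def)
    ultimately show ?thesis by simp
  qed
  have evU: "eventually (\<lambda>p. norm (fst p) = 1 \<and> snd p \<in> kdual sY \<and> onorm (snd p) = 1) U"
    using evPU[OF zero_less_one] by (rule eventually_mono) (use Psub[OF zero_less_one] in blast)
  have gl: "((\<lambda>p. norm (G (fst p))) \<longlongrightarrow> 1) U"
    unfolding tendsto_iff
  proof (intro allI impI)
    fix e :: real assume e: "e > 0"
    show "eventually (\<lambda>p. dist (norm (G (fst p))) 1 < e) U"
      using evPU[OF e]
    proof (rule eventually_mono)
      fix p assume "p \<in> P e"
      then have "norm (fst p) = 1" "norm (G (fst p)) > 1 - e" using Psub[OF e] by auto
      moreover have "norm (G (fst p)) \<le> 1" using G_le1 calculation(1) .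
      ultimately show "dist (norm (G (fst p))) 1 < e" by (simp add: dist_real_def)
    qed
  qed
  have tl: "((\<lambda>p. snd p (T (fst p))) \<longlongrightarrow> 1) U"
    unfolding tendsto_iff
  proof (intro allI impI)
    fix e :: real assume e: "e > 0"
    show "eventually (\<lambda>p. dist (snd p (T (fst p))) 1 < e) U"
      using evPU[OF e] by (rule eventually_mono) (use Psub[OF e] in \<open>auto simp: dist_norm\<close>)
  qed
  have evK: "eventually (\<lambda>p. snd p \<in> kdual sY) U" using evU by (rule eventually_mono) blast
  have \<psi>add: "\<psi> (\<lambda>x. S x + R x) = \<psi> S + \<psi> R" if S: "S \<in> Lop sX sY" and R: "R \<in> Lop sX sY" for S R
  proof -
    have SR: "(\<lambda>x. S x + R x) \<in> Lop sX sY" by (rule Lop_add[OF ksY S R])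
    have "((\<lambda>p. snd p (S (fst p)) + snd p (R (fst p))) \<longlongrightarrow> \<psi> S + \<psi> R) U"
      by (intro tendsto_add limS S R)
    moreover have "eventually (\<lambda>p. snd p (S (fst p)) + snd p (R (fst p)) = snd p (S (fst p) + R (fst p))) U"
      using evK by (rule eventually_mono) (simp add: kdual_add)
    ultimately have "((\<lambda>p. snd p (S (fst p) + R (fst p))) \<longlongrightarrow> \<psi> S + \<psi> R) U"
      using tendsto_cong by fast
    then show ?thesis using tendsto_unique[OF Une limS[OF SR]] by simp
  qed
  have \<psi>hom: "\<psi> (\<lambda>x. sY c (S x)) = c * \<psi> S" if S: "S \<in> Lop sX sY" for S c
  proof -
    have cS: "(\<lambda>x. sY c (S x)) \<in> Lop sX sY" by (rule Lop_smul[OF ksY S])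
    have "((\<lambda>p. c * snd p (S (fst p))) \<longlongrightarrow> c * \<psi> S) U"
      by (intro tendsto_mult_left limS S)
    moreover have "eventually (\<lambda>p. c * snd p (S (fst p)) = snd p (sY c (S (fst p)))) U"
      using evK by (rule eventually_mono) (simp add: kdual_hom)
    ultimately have "((\<lambda>p. snd p (sY c (S (fst p)))) \<longlongrightarrow> c * \<psi> S) U"
      using tendsto_cong by fast
    then show ?thesis using tendsto_unique[OF Une limS[OF cS]] by simp
  qed
  have \<psi>b: "norm (\<psi> S) \<le> 1 * gnorm G S" if "S \<in> Lop sX sY" for S
    using limit_bound[OF Une evU gl that limS[OF that]] by simp
  have \<psi>od: "\<psi> \<in> op_dual sX sY G"
    unfolding op_dual_def using \<psi>add \<psi>hom \<psi>b \<psi>out by blast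
  have "\<psi> \<in> W_set sX sY G T"
    unfolding W_set_def using \<psi>od Une evU gl tl limS by blast
  then show ?thesis using Une evPU limS by blast
qed

end


context opset
begin

lemma hard_estimate:
  fixes J :: 'k
  assumes ks: "kstruct J Rk" and f: "f \<in> op_dual sX sY G"
    and fb: "\<And>R. R \<in> Lop sX sY \<Longrightarrow> norm (f R) \<le> gnorm G R" and fT: "f T = 1"
    and S: "S \<in> Lop sX sY" and e: "\<epsilon> > 0"
  shows "\<exists>x y. norm x = 1 \<and> y \<in> kdual sY \<and> onorm y = 1 \<and> norm (G x) > 1 - \<epsilon>
           \<and> norm (y (T x) - 1) < \<epsilon> \<and> Rk (y (S x)) \<ge> Rk (f S) - \<epsilon>"
proof -
  define e1 where "e1 = min \<epsilon> 1"
  have e1: "e1 > 0" "e1 \<le> \<epsilon>" "e1 \<le> 1" using e by (auto simp: e1_def)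
  define a where "a = Rk (f S)"
  obtain M where M0: "M \<ge> 0" and M: "\<And>x. norm (S x) \<le> M * norm x" using Lop_bound[OF S] by blast
  define D where "D = \<bar>a\<bar> + M"
  have D0: "D \<ge> 0" using M0 by (simp add: D_def)
  define C where "C = D + 2"
  have C0: "C \<ge> 2" using D0 by (simp add: C_def)
  define t where "t = e1\<^sup>2 / (4 * C)"
  define \<eta> where "\<eta> = e1 / 2"
  have t0: "t > 0" using e1 C0 by (simp add: t_def)
  have tC: "t * C = e1\<^sup>2 / 4" using C0 by (simp add: t_def)
  have e1sq: "e1\<^sup>2 \<le> 1" using e1 by (simp add: power_le_one)
  have tle: "t \<le> 1/8"
  proof -
    have "t * C \<le> 1/4" using tC e1sq by simp
    moreover have "t * 2 \<le> t * C" using C0 t0 by simp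
    ultimately show ?thesis by simp
  qed
  have eta: "\<eta> > 0" "\<eta> \<le> 1/2" "2 * \<eta> = e1" using e1 by (auto simp: \<eta>_def)
  have teta: "t * \<eta> > 0" using t0 eta by simp
  define R where "R = (\<lambda>x. T x + sY (of_real t) (S x))"
  have RL: "R \<in> Lop sX sY" unfolding R_def by (rule Lop_add[OF ksY TL Lop_smul[OF ksY S]])
  have fR: "f R = 1 + of_real t * f S"
    unfolding R_def using opd_add[OF f TL Lop_smul[OF ksY S]] opd_hom[OF f S] fT by simp
  have RkfR: "Rk (f R) = 1 + t * a"
    using fR by (simp add: ks_add[OF ks] ks_scale[OF ks] ks_one[OF ks] a_def)
  have NR: "1 + t * a \<le> gnorm G R"
    using RkfR ks_bound[OF ks, of "f R"] fb[OF RL] by simp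
  obtain \<delta>a where da: "\<delta>a > 0" and daT: "\<And>x. norm x = 1 \<and> norm (G x) > 1 - \<delta>a \<Longrightarrow> norm (T x) \<le> 1 + t * \<eta>"
    using N_upper[OF TL teta] nT by auto
  define \<delta> where "\<delta> = min \<delta>a e1"
  have d: "\<delta> > 0" "\<delta> \<le> \<delta>a" "\<delta> \<le> e1" using da e1 by (auto simp: \<delta>_def)
  obtain x where x1: "norm x = 1" and xG: "norm (G x) > 1 - \<delta>" and xR: "norm (R x) > gnorm G R - t * \<eta>"
    using N_lower[OF RL d(1) teta] by blast
  have Tx: "norm (T x) \<le> 1 + t * \<eta>" using daT x1 xG d by auto
  have Rx: "norm (R x) > 1 + t * a - t * \<eta>" using xR NR by simp
  have te2: "t * \<eta> \<le> t * (1/2)" using eta t0 by (intro mult_left_mono) auto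
  have tM: "t * M \<ge> 0" using t0 M0 by simp
  have "t * C = t * \<bar>a\<bar> + t * M + 2 * t" by (simp add: C_def D_def algebra_simps)
  then have "t * \<bar>a\<bar> + t * \<eta> \<le> t * C" using te2 tM t0 by linarith
  then have "t * \<bar>a\<bar> + t * \<eta> \<le> 1/4" using tC e1sq by simp
  moreover have "t * a \<ge> - (t * \<bar>a\<bar>)" using t0 mult_left_mono[of "- \<bar>a\<bar>" a t] by simp
  ultimately have Rxpos: "norm (R x) > 0" using Rx by linarith
  then have Rxnz: "R x \<noteq> 0" by auto
  obtain y where yK: "y \<in> kdual sY" and yo: "onorm y = 1" and yR: "y (R x) = of_real (norm (R x))"
    using kdual_norming[OF ks ksY Rxnz] by blast
  define u where "u = y (T x)"
  define v where "v = y (S x)"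
  have yRuv: "y (R x) = u + of_real t * v"
    by (simp add: R_def u_def v_def kdual_add[OF yK] kdual_hom[OF yK])
  have RkRx: "Rk u + t * Rk v = norm (R x)"
    using yRuv yR by (metis ks_add[OF ks] ks_of_real[OF ks] ks_scale[OF ks])
  have nu: "norm u \<le> 1 + t * \<eta>" using kdual_norm_le[OF ksY yK yo, of "T x"] Tx by (simp add: u_def)
  have nv: "norm v \<le> M" using kdual_norm_le[OF ksY yK yo, of "S x"] M[of x] x1 by (simp add: v_def)
  have Rku: "Rk u \<le> 1 + t * \<eta>" using ks_bound[OF ks, of u] nu by simp
  have Rkv: "Rk v \<le> M" using ks_bound[OF ks, of v] nv by simp
  have c1: "Rk v \<ge> a - \<epsilon>"
  proof -
    have "t * Rk v > t * (a - 2 * \<eta>)" using RkRx Rx Rku by (simp add: algebra_simps)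
    then have "Rk v > a - 2 * \<eta>" using t0 by (simp add: mult_less_cancel_left_pos)
    then show ?thesis using eta e1 by simp
  qed
  have Rku2: "Rk u > 1 - t * D - t * \<eta>"
  proof -
    have "t * Rk v \<le> t * M" using Rkv t0 by (simp add: mult_left_mono)
    then have "Rk u > 1 + t * a - t * \<eta> - t * M" using RkRx Rx by simp
    moreover have "t * a \<ge> - (t * \<bar>a\<bar>)" using t0 mult_left_mono[of "- \<bar>a\<bar>" a t] by simp
    ultimately show ?thesis by (simp add: D_def algebra_simps)
  qed
  have c2: "norm (u - 1) < \<epsilon>"
  proof -
    have sq: "(norm (u - 1))\<^sup>2 = (norm u)\<^sup>2 - 2 * Rk u + 1" by (rule ks_norm_sub1[OF ks])
    have "(norm u)\<^sup>2 \<le> (1 + t * \<eta>)\<^sup>2" using nu by (simp add: power_mono)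
    also have "\<dots> = 1 + 2 * (t * \<eta>) + t * (t * \<eta> * \<eta>)" by (simp add: power2_eq_square algebra_simps)
    finally have nu2: "(norm u)\<^sup>2 \<le> 1 + 2 * (t * \<eta>) + t * (t * \<eta> * \<eta>)" .
    have "t * \<eta> * \<eta> \<le> 1 * (1/2) * (1/2)" using tle eta t0 by (intro mult_mono) auto
    then have "t * (t * \<eta> * \<eta>) \<le> t * (1/4)" using t0 by (intro mult_left_mono) auto
    moreover have "t * \<eta> \<le> t * (1/2)" using eta t0 by (intro mult_left_mono) auto
    moreover have "t * C = t * D + 2 * t" by (simp add: C_def algebra_simps)
    moreover have "t * D \<ge> 0" using t0 D0 by simp
    ultimately have "(norm (u - 1))\<^sup>2 < e1\<^sup>2" using sq nu2 Rku2 tC t0 by linarith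
    then have "norm (u - 1) < e1" using e1 by (simp add: power_less_imp_less_base)
    then show ?thesis using e1 by simp
  qed
  have c3: "norm (G x) > 1 - \<epsilon>" using xG d e1 by simp
  show ?thesis using x1 yK yo c3 c2 c1 by (auto simp: u_def v_def a_def)
qed

end


theorem theorem3p11:
  fixes sX :: "'k::real_normed_field \<Rightarrow> 'a::banach \<Rightarrow> 'a"
    and sY :: "'k \<Rightarrow> 'b::banach \<Rightarrow> 'b"
    and G T :: "'a \<Rightarrow> 'b"
  assumes "kspace sX" and "kspace sY"
    and "G \<in> Lop sX sY" and "onorm G = 1"
    and "norm_on_Lop sX sY (gnorm G)"
    and "T \<in> Lop sX sY" and "gnorm G T = 1"
  shows "smooth_point sX sY G T \<longleftrightarrow> (\<exists>\<phi>. W_set sX sY G T = {\<phi>} \<and> \<phi> T = 1)"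
proof -
  interpret opset sX sY G T using assms by unfold_locales
  obtain J :: 'k and Rk where ks: "kstruct J Rk" using kstruct_exists by blast
  show ?thesis
  proof
    assume "smooth_point sX sY G T"
    then obtain f where f: "f \<in> op_dual sX sY G" "op_dual_norm sX sY G f = 1" "f T = 1"
      and uniq: "\<And>g. g \<in> op_dual sX sY G \<Longrightarrow> op_dual_norm sX sY G g = 1 \<Longrightarrow> g T = 1 \<Longrightarrow> g = f"
      unfolding smooth_point_def by blast
    have fb: "\<And>R. R \<in> Lop sX sY \<Longrightarrow> norm (f R) \<le> gnorm G R" using supp_bound[OF f(1,2)] by blast
    define P where "P = (\<lambda>\<epsilon>::real. {p::'a \<times> ('b \<Rightarrow> 'k). norm (fst p) = 1 \<and> snd p \<in> kdual sY \<and> onorm (snd p) = 1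
        \<and> norm (G (fst p)) > 1 - \<epsilon> \<and> norm (snd p (T (fst p)) - 1) < \<epsilon>})"
    have Pne: "P \<epsilon> \<noteq> {}" if eps: "\<epsilon> > 0" for \<epsilon>
    proof -
      obtain x y where "norm x = 1 \<and> y \<in> kdual sY \<and> onorm y = 1 \<and> norm (G x) > 1 - \<epsilon>
           \<and> norm (y (T x) - 1) < \<epsilon>"
        using hard_estimate[OF ks f(1) fb f(3) TL eps] by blast
      then have "(x, y) \<in> P \<epsilon>" by (simp add: P_def)
      then show ?thesis by blast
    qed
    have Pmono: "P \<epsilon>1 \<subseteq> P \<epsilon>2" if "0 < \<epsilon>1" "\<epsilon>1 \<le> \<epsilon>2" for \<epsilon>1 \<epsilon>2
      using that by (auto simp: P_def)
    have Psub: "norm (fst p) = 1 \<and> snd p \<in> kdual sY \<and> onorm (snd p) = 1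
                   \<and> norm (G (fst p)) > 1 - \<epsilon> \<and> norm (snd p (T (fst p)) - 1) < \<epsilon>" if "\<epsilon> > 0" "p \<in> P \<epsilon>" for \<epsilon> p
      using that by (simp add: P_def)
    obtain \<psi> where \<psi>W: "\<psi> \<in> W_set sX sY G T"
      using W_exists[where P=P and J=J and Rk=Rk, OF ks Pne Pmono Psub] by blast
    have Wsub: "\<phi> = f" if "\<phi> \<in> W_set sX sY G T" for \<phi>
    proof -
      have s: "\<phi> \<in> op_dual sX sY G" "\<And>S. S \<in> Lop sX sY \<Longrightarrow> norm (\<phi> S) \<le> gnorm G S" "\<phi> T = 1"
        using W_support[OF that] by auto
      show ?thesis using uniq[OF s(1) supp_norm[OF s] s(3)] .
    qed
    have "W_set sX sY G T = {f}" using \<psi>W Wsub by blast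
    then show "\<exists>\<phi>. W_set sX sY G T = {\<phi>} \<and> \<phi> T = 1" using f(3) by blast
  next
    assume "\<exists>\<phi>. W_set sX sY G T = {\<phi>} \<and> \<phi> T = 1"
    then obtain \<phi> where W: "W_set sX sY G T = {\<phi>}" by blast
    have s: "\<phi> \<in> op_dual sX sY G" "\<And>S. S \<in> Lop sX sY \<Longrightarrow> norm (\<phi> S) \<le> gnorm G S" "\<phi> T = 1"
      using W_support[of \<phi>] W by auto
    have \<phi>n: "op_dual_norm sX sY G \<phi> = 1" by (rule supp_norm[OF s])
    have uq: "g = \<phi>" if g: "g \<in> op_dual sX sY G" "op_dual_norm sX sY G g = 1" "g T = 1" for g
    proof (rule ccontr)
      assume "g \<noteq> \<phi>"
      then obtain S where gS: "g S \<noteq> \<phi> S" by blast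
      have SL: "S \<in> Lop sX sY"
      proof (rule ccontr)
        assume "S \<notin> Lop sX sY"
        then show False using gS opd_out[OF g(1)] opd_out[OF s(1)] by simp
      qed
      have gb: "\<And>R. R \<in> Lop sX sY \<Longrightarrow> norm (g R) \<le> gnorm G R" using supp_bound[OF g(1,2)] by blast
      define w where "w = g S - \<phi> S"
      have wnz: "w \<noteq> 0" using gS by (simp add: w_def)
      define c where "c = of_real (norm w) / w"
      define S' where "S' = (\<lambda>x. sY c (S x))"
      have S'L: "S' \<in> Lop sX sY" unfolding S'_def by (rule Lop_smul[OF ksY SL])
      have diff: "g S' - \<phi> S' = of_real (norm w)"
      proof -
        have "g S' - \<phi> S' = c * w" unfolding S'_def w_def
          using opd_hom[OF g(1) SL] opd_hom[OF s(1) SL] by (simp add: algebra_simps)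
        also have "\<dots> = of_real (norm w)" using wnz by (simp add: c_def)
        finally show ?thesis .
      qed
      define a where "a = Rk (g S')"
      have Rkphi: "Rk (\<phi> S') = a - norm w"
      proof -
        have "Rk (g S' - \<phi> S') = norm w" using diff by (simp add: ks_of_real[OF ks])
        then show ?thesis by (simp add: a_def ks_diff[OF ks])
      qed
      define P where "P = (\<lambda>\<epsilon>::real. {p::'a \<times> ('b \<Rightarrow> 'k). norm (fst p) = 1 \<and> snd p \<in> kdual sY \<and> onorm (snd p) = 1
          \<and> norm (G (fst p)) > 1 - \<epsilon> \<and> norm (snd p (T (fst p)) - 1) < \<epsilon> \<and> Rk (snd p (S' (fst p))) \<ge> a - \<epsilon>})"
      have Pne: "P \<epsilon> \<noteq> {}" if eps: "\<epsilon> > 0" for \<epsilon>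
      proof -
        obtain x y where "norm x = 1 \<and> y \<in> kdual sY \<and> onorm y = 1 \<and> norm (G x) > 1 - \<epsilon>
             \<and> norm (y (T x) - 1) < \<epsilon> \<and> Rk (y (S' x)) \<ge> Rk (g S') - \<epsilon>"
          using hard_estimate[OF ks g(1) gb g(3) S'L eps] by blast
        then have "(x, y) \<in> P \<epsilon>" by (simp add: P_def a_def)
        then show ?thesis by blast
      qed
      have Pmono: "P \<epsilon>1 \<subseteq> P \<epsilon>2" if "0 < \<epsilon>1" "\<epsilon>1 \<le> \<epsilon>2" for \<epsilon>1 \<epsilon>2
        using that by (auto simp: P_def)
      have Psub: "norm (fst p) = 1 \<and> snd p \<in> kdual sY \<and> onorm (snd p) = 1
                     \<and> norm (G (fst p)) > 1 - \<epsilon> \<and> norm (snd p (T (fst p)) - 1) < \<epsilon>" if "\<epsilon> > 0" "p \<in> P \<epsilon>" for \<epsilon> p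
        using that by (simp add: P_def)
      obtain \<psi> U where \<psi>W: "\<psi> \<in> W_set sX sY G T" and Une: "U \<noteq> bot"
        and evP: "\<forall>\<epsilon>>0. eventually (\<lambda>p. p \<in> P \<epsilon>) U"
        and lim: "\<forall>S\<in>Lop sX sY. ((\<lambda>p. snd p (S (fst p))) \<longlongrightarrow> \<psi> S) U"
        using W_exists[where P=P and J=J and Rk=Rk, OF ks Pne Pmono Psub] by blast
      have \<psi>\<phi>: "\<psi> = \<phi>" using \<psi>W W by blast
      have limR: "((\<lambda>p. Rk (snd p (S' (fst p)))) \<longlongrightarrow> Rk (\<phi> S')) U"
        using Rk_tendsto[OF ks] lim S'L \<psi>\<phi> by blast
      have "a \<le> Rk (\<phi> S')"
      proof (rule field_le_epsilon)
        fix e :: real assume e: "e > 0"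
        have "eventually (\<lambda>p. a - e \<le> Rk (snd p (S' (fst p)))) U"
          using evP e by (auto simp: P_def elim: eventually_mono)
        then have "a - e \<le> Rk (\<phi> S')" using tendsto_lowerbound[OF limR _ Une] by blast
        then show "a \<le> Rk (\<phi> S') + e" by simp
      qed
      then show False using Rkphi wnz by simp
    qed
    show "smooth_point sX sY G T"
      unfolding smooth_point_def using s(1) \<phi>n s(3) uq by blast
  qed
qed


end
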